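(* Under the hypotheses of Theorem 5.2 ($\phi\in\Phi$; $\nu,\lambda>0$; $f$ proper lsc and Lipschitz relative to the closed set $\Omega\subseteq\mathbb{R}^{n_1\times n_2}\times\mathbb{R}^{n_1\times n_2}$ with constant $L_f$; $(X^\varrho,Y^\varrho)\in\Omega$ for all $(X,Y)\in\Omega,\varrho>0$; $\min_{(X,Y)\in\Omega}\{\nu f(X,Y)+\mathrm{rank}(X)+\lambda\|Y\|_0\}$ has a nonempty global solution set), for every $\varrho>\frac{\phi'_-(1)(1-t^* )\nu L_f}{\min(1,\lambda)(1-t_0)}$ that problem has the same global optimal solution set as $$\textstyle\min_{(X,Y)\in\Omega}\Big\{\nu f(X,Y)+\varrho\|X\|_*-\sum_{i=1}^{n_1}\psi^*(\varrho\sigma_i(X))+\varrho\lambda\|Y\|_1-\lambda\sum_{i=1}^{n_1}\sum_{j=1}^{n_2}\psi^*(\varrho|Y_{ij}|)\Big\}.$$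
   Context: $\Phi$ is the family of proper lsc functions $\phi:\mathbb{R}\to(-\infty,+\infty]$ with $\mathrm{int}(\mathrm{dom}\,\phi)\supseteq[0,1]$, convex on $[0,1]$, such that $\min_{t\in[0,1]}\phi(t)=0$ is attained at a (fixed) point $t^*\in[0,1)$, and $\phi(1)=1$; $\phi'_-(1)$ the left derivative at $1$. $\psi(t)=\phi(t)$ on $[0,1]$, $+\infty$ otherwise; $\psi^*$ its convex conjugate; $t_0\in[0,1)$ a point with $\frac{1}{1-t^*}\in\partial\psi(t_0)$. $X^\varrho:=U[\mathrm{Diag}(x^\varrho)\ 0]V^T$ for an SVD $X=U[\mathrm{Diag}(\sigma(X))\ 0]V^T$, $x^\varrho_i=\sigma_i(X)$ if $\varrho\sigma_i(X)>\phi'_-(1)$ else $0$; $Y^\varrho_{ij}=Y_{ij}$ if $\varrho|Y_{ij}|>\phi'_-(1)$ else $0$. Norms: nuclear $\|\cdot\|_*$, entrywise $\|\cdot\|_1$, $\|\cdot\|_0$ counts nonzeros. Lipschitz w.r.t. Frobenius norm. *)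

theory Defs
  imports "HOL-Analysis.Analysis" "HOL-Library.Multiset"
begin

definition lsc_fun :: "('a::topological_space \<Rightarrow> ereal) \<Rightarrow> bool" where
  "lsc_fun g \<longleftrightarrow> (\<forall>x. g x \<le> Liminf (at x) g)"

definition proper_fun :: "('a \<Rightarrow> ereal) \<Rightarrow> bool" where
  "proper_fun g \<longleftrightarrow> (\<forall>x. g x \<noteq> -\<infinity>) \<and> (\<exists>x. g x \<noteq> \<infinity>)"

definition in_Phi :: "(real \<Rightarrow> ereal) \<Rightarrow> real \<Rightarrow> bool" where
  "in_Phi phi tstar \<longleftrightarrow>
     proper_fun phi \<and> lsc_fun phi \<and>
     {0..1} \<subseteq> interior {x. phi x \<noteq> \<infinity>} \<and>
     convex_on {0..1} (\<lambda>t. real_of_ereal (phi t)) \<and>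
     0 \<le> tstar \<and> tstar < 1 \<and> phi tstar = 0 \<and> (\<forall>t\<in>{0..1}. phi tstar \<le> phi t) \<and>
     phi 1 = 1"

definition psi :: "(real \<Rightarrow> ereal) \<Rightarrow> real \<Rightarrow> ereal" where
  "psi phi t = (if t \<in> {0..1} then phi t else \<infinity>)"

definition psi_conj :: "(real \<Rightarrow> ereal) \<Rightarrow> real \<Rightarrow> ereal" where
  "psi_conj phi s = (SUP t. ereal (s * t) - psi phi t)"

definition subdiff_psi :: "(real \<Rightarrow> ereal) \<Rightarrow> real \<Rightarrow> real set" where
  "subdiff_psi phi t0 = {g. psi phi t0 \<noteq> \<infinity> \<and>
      (\<forall>t. psi phi t \<ge> psi phi t0 + ereal (g * (t - t0)))}"

text \<open>Matrices in R^(n1 x n2) are real^n2^n1 (rows indexed by 'n1); the norm of this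
  type is the Frobenius norm.  A rectangular diagonal matrix [Diag(s) 0] is represented,
  up to a column permutation (absorbed into V), by an injection e from row to column indices.\<close>
definition rdiag :: "('n1 \<Rightarrow> 'n2) \<Rightarrow> ('n1 \<Rightarrow> real) \<Rightarrow> real^'n2^'n1" where
  "rdiag e s = (\<chi> i j. if j = e i then s i else 0)"

definition is_svd :: "real^'n2^'n1 \<Rightarrow> real^'n1^'n1 \<Rightarrow> ('n1 \<Rightarrow> 'n2) \<Rightarrow> ('n1 \<Rightarrow> real)
                      \<Rightarrow> real^'n2^'n2 \<Rightarrow> bool" where
  "is_svd X U e s V \<longleftrightarrow> orthogonal_matrix U \<and> orthogonal_matrix V \<and> inj e \<and>
      (\<forall>i. 0 \<le> s i) \<and> X = U ** rdiag e s ** transpose V"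

definition sing_vals :: "real^'n2^'n1 \<Rightarrow> real multiset" where
  "sing_vals X = (THE M. \<exists>U e s V. is_svd X U e s V \<and> M = image_mset s (mset_set UNIV))"

definition nuc_norm :: "real^'n2^'n1 \<Rightarrow> real" where
  "nuc_norm X = sum_mset (sing_vals X)"

text \<open>X^rho with threshold c = phi'_-(1).\<close>
definition trunc_mat :: "real \<Rightarrow> real \<Rightarrow> real^'n2^'n1 \<Rightarrow> real^'n2^'n1" where
  "trunc_mat c rho X = (THE Z. \<exists>U e s V. is_svd X U e s V \<and>
      Z = U ** rdiag e (\<lambda>i. if rho * s i > c then s i else 0) ** transpose V)"

definition trunc_ent :: "real \<Rightarrow> real \<Rightarrow> real^'n2^'n1 \<Rightarrow> real^'n2^'n1" where
  "trunc_ent c rho Y = (\<chi> i j. if rho * \<bar>Y $ i $ j\<bar> > c then Y $ i $ j else 0)"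

definition l1_norm :: "real^'n2^'n1 \<Rightarrow> real" where
  "l1_norm Y = (\<Sum>i\<in>UNIV. \<Sum>j\<in>UNIV. \<bar>Y $ i $ j\<bar>)"

definition l0_norm :: "real^'n2^'n1 \<Rightarrow> nat" where
  "l0_norm Y = card {(i, j). Y $ i $ j \<noteq> 0}"

definition argmin_on :: "'a set \<Rightarrow> ('a \<Rightarrow> ereal) \<Rightarrow> 'a set" where
  "argmin_on S F = {p \<in> S. \<forall>q\<in>S. F p \<le> F q}"

end

theory Submission
  imports Defs
begin


definition mdiag :: "('n::finite \<Rightarrow> real) \<Rightarrow> real^'n^'n" where
  "mdiag c = (\<chi> i j. if i = j then c i else 0)"

lemma inner_mv_transpose: "inner x ((A::real^'n^'m) *v y) = inner (transpose A *v x) y"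
  by (metis dot_lmul_matrix transpose_matrix_vector inner_commute)

lemma sym_inner: assumes "transpose A = A" shows "inner x ((A::real^'n^'n) *v y) = inner (A *v x) y"
  using inner_mv_transpose[of x A y] assms by simp

lemma mv_add: "(A::real^'n^'m) *v (x + y) = A *v x + A *v y"
  by (simp add: linear_add)
lemma mv_scale: "(A::real^'n^'m) *v (c *\<^sub>R x) = c *\<^sub>R (A *v x)"
  by (simp add: linear_scale)

lemma quad_nonneg_imp:
  fixes a c :: real
  assumes "\<And>t. 0 \<le> 2 * t * c + t^2 * a" and "a \<ge> 0"
  shows "c = 0"
proof (rule ccontr)
  assume "c \<noteq> 0"
  define t where "t = - c / (a + 1)"
  have a1: "a + 1 \<noteq> 0" using assms(2) by simp
  have "0 \<le> 2 * t * c + t^2 * a" by (rule assms(1))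
  then have "0 \<le> (a+1)^2 * (2 * t * c + t^2 * a)" by simp
  also have "(a+1)^2 * (2 * t * c + t^2 * a) = 2*c*(a+1)*(t*(a+1)) + a*(t*(a+1))^2"
    by (simp add: algebra_simps power2_eq_square)
  also have "t*(a+1) = -c" using a1 unfolding t_def by simp
  also have "2*c*(a+1)*(-c) + a*(-c)^2 = -(c^2) * (a+2)"
    by (simp add: algebra_simps power2_eq_square)
  also have "\<dots> < 0"
    using assms(2) \<open>c \<noteq> 0\<close> by (simp add: mult_pos_pos)
  finally show False by simp
qed

lemma eigvec_exists:
  fixes A :: "real^'n^'n"
  assumes sym: "transpose A = A" and S: "subspace S" and ne: "S \<noteq> {0}"
    and inv: "\<And>x. x \<in> S \<Longrightarrow> A *v x \<in> S"
  obtains v \<mu> where "v \<in> S" "norm v = 1" "A *v v = \<mu> *\<^sub>R v"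
proof -
  let ?K = "S \<inter> sphere 0 1"
  let ?q = "\<lambda>x. inner x (A *v x)"
  have cK: "compact ?K"
    using closed_subspace[OF S] compact_sphere by (simp add: closed_Int_compact)
  obtain x where x: "x \<in> S" "x \<noteq> 0" using ne subspace_0[OF S] by auto
  then have "x /\<^sub>R norm x \<in> ?K" using subspace_scale[OF S] by auto
  then have neK: "?K \<noteq> {}" by blast
  have cont: "continuous_on ?K ?q"
    by (intro continuous_intros linear_continuous_on bounded_linear_inner_left
        matrix_vector_mul_bounded_linear)
  obtain v where vK: "v \<in> ?K" and vmax: "\<And>y. y \<in> ?K \<Longrightarrow> ?q y \<le> ?q v"
    using continuous_attains_sup[OF cK neK cont] by blast
  define \<mu> where "\<mu> = ?q v"
  have vS: "v \<in> S" and nv: "norm v = 1" using vK by auto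
  have psd: "?q y \<le> \<mu> * (norm y)^2" if "y \<in> S" for y
  proof (cases "y = 0")
    case False
    have "y /\<^sub>R norm y \<in> ?K" using subspace_scale[OF S that] False by auto
    then have "?q (y /\<^sub>R norm y) \<le> \<mu>" using vmax \<mu>_def by blast
    moreover have "?q (y /\<^sub>R norm y) = ?q y / (norm y)^2"
      by (simp add: mv_scale power2_eq_square divide_inverse inverse_mult_distrib mult_ac)
    ultimately have "?q y / (norm y)^2 \<le> \<mu>" by simp
    then show ?thesis using False by (simp add: pos_divide_le_eq)
  qed simp
  have key: "inner w (\<mu> *\<^sub>R v - A *v v) = 0" if wS: "w \<in> S" for w
  proof -
    let ?c = "inner w (\<mu> *\<^sub>R v - A *v v)"
    let ?a = "\<mu> * (norm w)^2 - ?q w"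
    have a0: "?a \<ge> 0" using psd[OF wS] by simp
    have "0 \<le> 2 * t * ?c + t^2 * ?a" for t
    proof -
      have yS: "v + t *\<^sub>R w \<in> S" using S vS wS by (simp add: subspace_add subspace_scale)
      have sw: "inner v (A *v w) = inner w (A *v v)"
        using sym_inner[OF sym, of v w] by (simp add: inner_commute)
      have "?q (v + t *\<^sub>R w) = ?q v + 2 * t * inner w (A *v v) + t^2 * ?q w"
        using sw by (simp add: mv_add mv_scale inner_add_left inner_add_right power2_eq_square algebra_simps)
      moreover have "(norm (v + t *\<^sub>R w))^2 = 1 + 2 * t * inner v w + t^2 * (norm w)^2"
      proof -
        have vv: "inner v v = 1" using nv by (simp add: power2_norm_eq_inner[symmetric])
        show ?thesis unfolding power2_norm_eq_inner using vv
          by (simp add: inner_add_left inner_add_right inner_commute algebra_simps power2_eq_square)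
      qed
      ultimately show ?thesis using psd[OF yS] \<mu>_def
        by (simp add: inner_diff_right inner_commute algebra_simps)
    qed
    then show ?thesis using quad_nonneg_imp[OF _ a0] by blast
  qed
  have "\<mu> *\<^sub>R v - A *v v \<in> S" using S vS inv[OF vS] by (simp add: subspace_diff subspace_scale)
  from key[OF this] have "A *v v = \<mu> *\<^sub>R v" by simp
  then show ?thesis using that vS nv by blast
qed

lemma eigbasis_subspace:
  fixes A :: "real^'n^'n"
  assumes sym: "transpose A = A"
  shows "subspace S \<Longrightarrow> (\<And>x. x \<in> S \<Longrightarrow> A *v x \<in> S) \<Longrightarrow>
    \<exists>B. B \<subseteq> S \<and> pairwise orthogonal B \<and> (\<forall>x\<in>B. norm x = 1) \<and>
        (\<forall>x\<in>B. \<exists>\<mu>. A *v x = \<mu> *\<^sub>R x) \<and> card B = dim S \<and> finite B"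
proof (induction "dim S" arbitrary: S rule: less_induct)
  case less
  show ?case
  proof (cases "S = {0}")
    case True then show ?thesis by (intro exI[of _ "{}"]) auto
  next
    case False
    obtain v \<mu> where vS: "v \<in> S" and nv: "norm v = 1" and Av: "A *v v = \<mu> *\<^sub>R v"
      using eigvec_exists[OF sym less.prems(1) False less.prems(2)] by blast
    have vv: "inner v v = 1" using nv by (simp add: power2_norm_eq_inner[symmetric])
    define S' where "S' = S \<inter> {x. inner v x = 0}"
    have sub': "subspace S'" unfolding S'_def
      by (intro subspace_inter less.prems(1) subspace_hyperplane)
    have inv': "A *v x \<in> S'" if "x \<in> S'" for x
    proof -
      have "inner v (A *v x) = inner (A *v v) x" by (rule sym_inner[OF sym])
      also have "\<dots> = 0" using that Av by (simp add: S'_def)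
      finally show ?thesis using that less.prems(2) by (simp add: S'_def)
    qed
    have S'S: "S' \<subseteq> S" by (auto simp: S'_def)
    have "S \<subseteq> span (insert v S')"
    proof
      fix x assume xS: "x \<in> S"
      have "x - (inner v x) *\<^sub>R v \<in> S'"
        using xS vS less.prems(1) vv by (simp add: S'_def subspace_diff subspace_scale inner_diff_right)
      then have "x - (inner v x) *\<^sub>R v \<in> span (insert v S')" by (simp add: span_base)
      moreover have "(inner v x) *\<^sub>R v \<in> span (insert v S')" by (simp add: span_base span_mul)
      ultimately have "(x - (inner v x) *\<^sub>R v) + (inner v x) *\<^sub>R v \<in> span (insert v S')"
        by (rule span_add)
      then show "x \<in> span (insert v S')" by simp
    qed
    moreover have "span (insert v S') \<subseteq> S"
      using vS S'S less.prems(1) by (simp add: span_minimal)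
    ultimately have Seq: "S = span (insert v S')" by blast
    have vnot: "v \<notin> span S'" using sub' vv by (simp add: span_eq_iff[THEN iffD2] S'_def)
    have dimS: "dim S = dim S' + 1"
      using Seq vnot by (metis dim_insert dim_span)
    then have "dim S' < dim S" by simp
    then obtain B' where B': "B' \<subseteq> S'" "pairwise orthogonal B'" "\<forall>x\<in>B'. norm x = 1"
        "\<forall>x\<in>B'. \<exists>\<mu>. A *v x = \<mu> *\<^sub>R x" "card B' = dim S'" "finite B'"
      using less.hyps[OF _ sub' inv'] by blast
    have vB': "v \<notin> B'" using B'(1) vv by (auto simp: S'_def)
    show ?thesis
    proof (intro exI[of _ "insert v B'"] conjI)
      show "insert v B' \<subseteq> S" using vS B'(1) S'S by auto
      show "pairwise orthogonal (insert v B')"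
        using B'(1,2) by (auto simp: pairwise_insert orthogonal_def S'_def inner_commute)
      show "\<forall>x\<in>insert v B'. norm x = 1" using nv B'(3) by auto
      show "\<forall>x\<in>insert v B'. \<exists>\<mu>. A *v x = \<mu> *\<^sub>R x" using Av B'(4) by auto
      show "card (insert v B') = dim S" using vB' B'(5,6) dimS by simp
      show "finite (insert v B')" using B'(6) by simp
    qed
  qed
qed

lemma mul_mdiag_right: "((M::real^'n^'m) ** mdiag c) $ i $ j = M $ i $ j * c j"
  by (simp add: matrix_matrix_mult_def mdiag_def if_distrib if_distribR sum.delta' cong: if_cong)

lemma mul_mdiag_left: "(mdiag c ** (M::real^'m^'n)) $ i $ j = c i * M $ i $ j"
  by (simp add: matrix_matrix_mult_def mdiag_def if_distrib if_distribR sum.delta cong: if_cong)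

lemma spectral:
  fixes A :: "real^'n^'n"
  assumes sym: "transpose A = A"
  obtains U lam where "orthogonal_matrix U" "A = U ** mdiag lam ** transpose U"
proof -
  obtain B where B: "pairwise orthogonal B" "\<forall>x\<in>B. norm x = 1"
     "\<forall>x\<in>B. \<exists>\<mu>. A *v x = \<mu> *\<^sub>R x" "card B = dim (UNIV::(real^'n) set)" "finite B"
    using eigbasis_subspace[OF sym, of UNIV] by auto
  have "card B = CARD('n)" using B(4) by simp
  then obtain f where f: "bij_betw f (UNIV::'n set) B"
    by (metis B(5) finite_class.finite_UNIV finite_same_card_bij)
  have fB: "f j \<in> B" for j using f by (auto simp: bij_betw_def)
  define U where "U = (\<chi> i j. f j $ i)"
  define lam where "lam = (\<lambda>j. SOME \<mu>. A *v f j = \<mu> *\<^sub>R f j)"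
  have eig: "A *v f j = lam j *\<^sub>R f j" for j
    unfolding lam_def using B(3) fB[of j] by (metis (mono_tags, lifting) someI_ex)
  have [simp]: "\<And>i. norm (f i) = 1" using fB B(2) by blast
  have [simp]: "\<And>i j. i \<noteq> j \<Longrightarrow> orthogonal (f i) (f j)"
    using B(1) f by (auto simp: pairwise_def bij_betw_def inj_on_def)
  have oU: "orthogonal_matrix U"
    by (simp add: U_def orthogonal_matrix_orthonormal_columns column_def)
  have AU: "A ** U = U ** mdiag lam"
  proof -
    have "(A ** U) $ i $ j = (U ** mdiag lam) $ i $ j" for i j
    proof -
      have "(A ** U) $ i $ j = (A *v f j) $ i"
        by (simp add: matrix_matrix_mult_def matrix_vector_mult_def U_def)
      also have "\<dots> = lam j * f j $ i" by (simp add: eig)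
      finally show ?thesis by (simp add: mul_mdiag_right U_def mult.commute)
    qed
    then show ?thesis by (simp add: vec_eq_iff)
  qed
  have "A = A ** U ** transpose U"
    using oU by (simp add: orthogonal_matrix_def matrix_mul_assoc[symmetric])
  also have "\<dots> = U ** mdiag lam ** transpose U" by (simp add: AU)
  finally show ?thesis using that oU by blast
qed


lemma orthonormal_extend:
  fixes S :: "'a::euclidean_space set"
  assumes orth: "pairwise orthogonal S" and un: "\<forall>x\<in>S. norm x = 1"
  obtains B where "S \<subseteq> B" "pairwise orthogonal B" "\<forall>x\<in>B. norm x = 1" "finite B" "card B = DIM('a)"
proof -
  obtain U where U: "pairwise orthogonal (S \<union> U)" "span (S \<union> U) = span (S \<union> UNIV)"
    using orthogonal_extension[OF orth, of UNIV] by metis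
  define T where "T = (S \<union> U) - {0}"
  have oT: "pairwise orthogonal T" by (rule pairwise_subset[OF U(1)]) (auto simp: T_def)
  have iT: "independent T" using oT by (simp add: T_def pairwise_orthogonal_independent)
  have fT: "finite T" using iT independent_imp_finite by blast
  have sT: "span T = UNIV" using U(2) span_delete_0[of "S \<union> U"] by (simp add: T_def span_UNIV)
  have cT: "card T = DIM('a)" using iT sT
    by (metis dim_UNIV dim_span indep_card_eq_dim_span)
  have 0: "0 \<notin> T" by (simp add: T_def)
  let ?B = "(\<lambda>x. x /\<^sub>R norm x) ` T"
  show thesis
  proof
    have "x \<in> ?B" if "x \<in> S" for x
    proof -
      have "x \<in> T" using that un by (auto simp: T_def)
      moreover have "x = x /\<^sub>R norm x" using that un by simp
      ultimately show ?thesis by blast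
    qed
    then show "S \<subseteq> ?B" by blast
    show "pairwise orthogonal ?B" unfolding pairwise_def
    proof (clarify)
      fix x y assume xy: "x \<in> T" "y \<in> T" "x /\<^sub>R norm x \<noteq> y /\<^sub>R norm y"
      then have "x \<noteq> y" by auto
      then have "orthogonal x y" using oT xy(1,2) by (simp add: pairwise_def)
      then show "orthogonal (x /\<^sub>R norm x) (y /\<^sub>R norm y)" by (simp add: orthogonal_def)
    qed
    show "\<forall>x\<in>?B. norm x = 1"
    proof clarify
      fix x assume "x \<in> T"
      then have "x \<noteq> 0" using 0 by auto
      then show "norm (x /\<^sub>R norm x) = 1" by simp
    qed
    show "finite ?B" using fT by simp
    have "inj_on (\<lambda>x. x /\<^sub>R norm x) T"
    proof (rule inj_onI)
      fix x y assume xy: "x \<in> T" "y \<in> T" "x /\<^sub>R norm x = y /\<^sub>R norm y"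
      show "x = y"
      proof (rule ccontr)
        assume "x \<noteq> y"
        then have "inner x y = 0" using oT xy by (simp add: pairwise_def orthogonal_def)
        then have "inner (x /\<^sub>R norm x) (y /\<^sub>R norm y) = 0" by simp
        then have "inner (x /\<^sub>R norm x) (x /\<^sub>R norm x) = 0" using xy(3) by simp
        then have "x = 0" by simp
        then show False using 0 xy(1) by simp
      qed
    qed
    then show "card ?B = DIM('a)" by (simp add: card_image cT)
  qed
qed


lemma mmt_entry: "((M::real^'n^'m) ** transpose M) $ i $ j = inner (M $ i) (M $ j)"
  by (simp add: matrix_matrix_mult_def transpose_def inner_vec_def)

lemma svd_exists:
  fixes X :: "real^'n2^'n1"
  assumes dims: "CARD('n1) \<le> CARD('n2)"
  shows "\<exists>U e s V. is_svd X U e s V"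
proof -
  have sym: "transpose (X ** transpose X) = X ** transpose X" by (simp only: matrix_transpose_mul transpose_transpose)
  obtain U lam where oU: "orthogonal_matrix U" and A: "X ** transpose X = U ** mdiag lam ** transpose U"
    using spectral[OF sym] by blast
  have UtU: "transpose U ** U = mat 1" and UUt: "U ** transpose U = mat 1"
    using oU by (auto simp: orthogonal_matrix_def)
  define M where "M = transpose U ** X"
  have "M ** transpose M = transpose U ** (X ** transpose X) ** U"
    by (simp only: M_def matrix_transpose_mul transpose_transpose matrix_mul_assoc)
  also have "\<dots> = (transpose U ** U) ** mdiag lam ** (transpose U ** U)"
    by (simp only: A matrix_mul_assoc)
  also have "\<dots> = mdiag lam" by (simp add: UtU)
  finally have MM: "M ** transpose M = mdiag lam" .
  have orows: "inner (M $ i) (M $ j) = 0" if "i \<noteq> j" for i j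
    using arg_cong[OF MM, of "\<lambda>Z. Z $ i $ j"] that by (simp add: mmt_entry mdiag_def)
  define s where "s = (\<lambda>i. norm (M $ i))"
  define K where "K = {i. M $ i \<noteq> 0}"
  define nr where "nr = (\<lambda>i. M $ i /\<^sub>R s i)"
  have nr1: "norm (nr i) = 1" if "i \<in> K" for i using that by (simp add: nr_def s_def K_def)
  have nrorth: "inner (nr i) (nr j) = 0" if "i \<noteq> j" for i j
    using orows[OF that] by (simp add: nr_def)
  have nrinj: "inj_on nr K"
  proof (rule inj_onI)
    fix i j assume "i \<in> K" "j \<in> K" "nr i = nr j"
    then show "i = j" using nrorth[of i j] nr1[of i] by (metis inner_eq_zero_iff norm_zero zero_neq_one)
  qed
  obtain B where B: "nr ` K \<subseteq> B" "pairwise orthogonal B" "\<forall>x\<in>B. norm x = 1" "finite B"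
      "card B = DIM(real^'n2)"
  proof -
    have po: "pairwise orthogonal (nr ` K)" unfolding pairwise_def orthogonal_def
      by (auto intro: nrorth)
    have un: "\<forall>x\<in>nr ` K. norm x = 1" using nr1 by auto
    show ?thesis using orthonormal_extend[OF po un] that by blast
  qed
  have "card B = CARD('n2)" using B(5) by simp
  then obtain g where g: "bij_betw g (UNIV::'n2 set) B"
    using finite_same_card_bij[of "UNIV::'n2 set" B] B(4) by auto
  have gB: "g j \<in> B" for j using g by (auto simp: bij_betw_def)
  define e1 where "e1 = (\<lambda>i. inv_into UNIV g (nr i))"
  have ge1: "g (e1 i) = nr i" if "i \<in> K" for i
    using that B(1) g unfolding e1_def by (metis bij_betw_inv_into_right image_subset_iff)
  have inje1: "inj_on e1 K"
    by (rule inj_onI) (metis ge1 nrinj inj_on_def)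
  have "card (UNIV - K) \<le> card (UNIV - e1 ` K)"
  proof -
    have "card (UNIV - K) = CARD('n1) - card K" by (simp add: card_Diff_subset)
    moreover have "card (UNIV - e1 ` K) = CARD('n2) - card K"
      using inje1 by (simp add: card_Diff_subset card_image)
    ultimately show ?thesis using dims by simp
  qed
  then obtain h where h: "h ` (UNIV - K) \<subseteq> UNIV - e1 ` K" "inj_on h (UNIV - K)"
    using card_le_inj[of "UNIV - K" "UNIV - e1 ` K"] by auto
  define e where "e = (\<lambda>i. if i \<in> K then e1 i else h i)"
  have inje: "inj e"
  proof (rule injI)
    fix i j assume eq: "e i = e j"
    show "i = j"
    proof (cases "i \<in> K"; cases "j \<in> K")
      assume "i \<in> K" "j \<in> K" then show ?thesis using eq inje1 by (simp add: e_def inj_on_def)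
    next
      assume "i \<notin> K" "j \<notin> K" then show ?thesis using eq h(2) by (simp add: e_def inj_on_def)
    next
      assume "i \<in> K" "j \<notin> K" then show ?thesis using eq h(1) by (auto simp: e_def)
    next
      assume "i \<notin> K" "j \<in> K" then show ?thesis using eq h(1) by (force simp: e_def)
    qed
  qed
  define V where "V = (\<chi> a b. g b $ a)"
  have [simp]: "\<And>i. norm (g i) = 1" using gB B(3) by blast
  have [simp]: "\<And>i j. i \<noteq> j \<Longrightarrow> orthogonal (g i) (g j)"
    using B(2) g by (auto simp: pairwise_def bij_betw_def inj_on_def)
  have oV: "orthogonal_matrix V"
    by (simp add: V_def orthogonal_matrix_orthonormal_columns column_def)
  have Meq: "M = rdiag e s ** transpose V"
  proof -
    have "M $ i $ b = (rdiag e s ** transpose V) $ i $ b" for i b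
    proof -
      have "(rdiag e s ** transpose V) $ i $ b = s i * g (e i) $ b"
        by (simp add: matrix_matrix_mult_def rdiag_def transpose_def V_def if_distrib if_distribR sum.delta' cong: if_cong)
      also have "\<dots> = M $ i $ b"
      proof (cases "i \<in> K")
        case True
        then show ?thesis using ge1[OF True] by (simp add: e_def nr_def s_def K_def)
      next
        case False
        then show ?thesis by (simp add: s_def K_def)
      qed
      finally show ?thesis by simp
    qed
    then show ?thesis by (simp add: vec_eq_iff)
  qed
  have "X = U ** M" by (simp add: M_def matrix_mul_assoc UUt)
  then have "X = U ** rdiag e s ** transpose V" by (simp add: Meq matrix_mul_assoc)
  moreover have "\<forall>i. 0 \<le> s i" by (simp add: s_def)
  ultimately have "is_svd X U e s V" using oU oV inje by (simp add: is_svd_def)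
  then show ?thesis by blast
qed



lemma rdiag_mul_left: "(rdiag e s ** M) $ i $ j = s i * M $ (e i) $ j"
proof -
  have "(rdiag e s ** M) $ i $ j = (\<Sum>k\<in>UNIV. (if k = e i then s i else 0) * M $ k $ j)"
    unfolding matrix_matrix_mult_def rdiag_def by simp
  also have "\<dots> = (\<Sum>k\<in>UNIV. if k = e i then s i * M $ k $ j else 0)"
    by (rule sum.cong) auto
  finally show ?thesis by (simp add: sum.delta)
qed

lemma rdiag_rdiagT:
  assumes "inj e"
  shows "rdiag e s ** transpose (rdiag e s) = mdiag (\<lambda>i. (s i)^2)"
proof -
  have "(rdiag e s ** transpose (rdiag e s)) $ i $ j = mdiag (\<lambda>i. (s i)^2) $ i $ j" for i j
  proof -
    have "(rdiag e s ** transpose (rdiag e s)) $ i $ j = s i * (if e i = e j then s j else 0)"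
      by (simp only: rdiag_mul_left) (simp add: transpose_def rdiag_def)
    also have "\<dots> = mdiag (\<lambda>i. (s i)^2) $ i $ j"
      using assms by (auto simp: mdiag_def inj_def power2_eq_square)
    finally show ?thesis .
  qed
  then show ?thesis by (simp add: vec_eq_iff)
qed
lemma svd_XXt:
  assumes "is_svd X U e s V"
  shows "X ** transpose X = U ** mdiag (\<lambda>i. (s i)^2) ** transpose U"
proof -
  have V: "transpose V ** V = mat 1" and X: "X = U ** rdiag e s ** transpose V" and e: "inj e"
    using assms by (auto simp: is_svd_def orthogonal_matrix_def)
  have "X ** transpose X = U ** rdiag e s ** (transpose V ** V) ** transpose (rdiag e s) ** transpose U"
    by (simp only: X matrix_transpose_mul transpose_transpose matrix_mul_assoc)
  also have "\<dots> = U ** (rdiag e s ** transpose (rdiag e s)) ** transpose U"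
    by (simp only: V matrix_mul_rid matrix_mul_assoc)
  finally show ?thesis by (simp only: rdiag_rdiagT[OF e])
qed

lemma trace_conj:
  assumes "orthogonal_matrix U"
  shows "(\<Sum>a\<in>UNIV. (U ** mdiag c ** transpose U) $ a $ a) = (\<Sum>i\<in>UNIV. c i)"
proof -
  have col: "(\<Sum>a\<in>UNIV. U $ a $ i * U $ a $ i) = 1" for i
  proof -
    have "transpose U ** U = mat 1" using assms by (simp add: orthogonal_matrix_def)
    from arg_cong[OF this, of "\<lambda>Z. Z $ i $ i"] show ?thesis
      by (simp add: matrix_matrix_mult_def transpose_def mat_def)
  qed
  have "(\<Sum>a\<in>UNIV. (U ** mdiag c ** transpose U) $ a $ a) = (\<Sum>a\<in>UNIV. \<Sum>i\<in>UNIV. c i * (U $ a $ i * U $ a $ i))"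
    unfolding matrix_matrix_mult_def[of "U ** mdiag c" "transpose U"]
    by (simp add: mul_mdiag_right transpose_def mult_ac)
  also have "\<dots> = (\<Sum>i\<in>UNIV. c i * (\<Sum>a\<in>UNIV. U $ a $ i * U $ a $ i))"
    by (subst sum.swap) (simp add: sum_distrib_left)
  also have "\<dots> = (\<Sum>i\<in>UNIV. c i)" by (simp add: col)
  finally show ?thesis .
qed


lemma svd_inv:
  assumes A: "is_svd X U e s V" and B: "is_svd X U' e' s' V'"
  shows "U ** mdiag (\<lambda>i. g ((s i)^2)) ** transpose U = U' ** mdiag (\<lambda>i. g ((s' i)^2)) ** transpose U'"
proof -
  let ?D = "mdiag (\<lambda>i. (s i)^2)" and ?D' = "mdiag (\<lambda>i. (s' i)^2)"
  let ?G = "mdiag (\<lambda>i. g ((s i)^2))" and ?G' = "mdiag (\<lambda>i. g ((s' i)^2))"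
  have oU: "orthogonal_matrix U" and oU': "orthogonal_matrix U'"
    using A B by (auto simp: is_svd_def)
  have UtU: "transpose U ** U = mat 1" and UUt: "U ** transpose U = mat 1"
    and UtU': "transpose U' ** U' = mat 1" and UUt': "U' ** transpose U' = mat 1"
    using oU oU' by (auto simp: orthogonal_matrix_def)
  have eq: "U ** ?D ** transpose U = U' ** ?D' ** transpose U'"
    using svd_XXt[OF A] svd_XXt[OF B] by metis
  define P where "P = transpose U ** U'"
  have DP: "?D ** P = P ** ?D'"
  proof -
    have "?D ** P = (transpose U ** U) ** ?D ** (transpose U ** U')"
      by (simp only: P_def UtU matrix_mul_lid)
    also have "\<dots> = transpose U ** (U ** ?D ** transpose U) ** U'"
      by (simp only: matrix_mul_assoc)
    also have "\<dots> = transpose U ** (U' ** ?D' ** transpose U') ** U'"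
      by (simp only: eq)
    also have "\<dots> = (transpose U ** U') ** ?D' ** (transpose U' ** U')"
      by (simp only: matrix_mul_assoc)
    also have "\<dots> = P ** ?D'" by (simp only: P_def UtU' matrix_mul_rid)
    finally show ?thesis .
  qed
  have GP: "?G ** P = P ** ?G'"
  proof -
    have "(?G ** P) $ i $ j = (P ** ?G') $ i $ j" for i j
    proof -
      have "(s i)^2 * P $ i $ j = P $ i $ j * (s' j)^2"
        using arg_cong[OF DP, of "\<lambda>Z. Z $ i $ j"] by (simp add: mul_mdiag_left mul_mdiag_right)
      then have "P $ i $ j = 0 \<or> (s i)^2 = (s' j)^2" by auto
      then show ?thesis by (auto simp: mul_mdiag_left mul_mdiag_right)
    qed
    then show ?thesis by (simp add: vec_eq_iff)
  qed
  have U'eq: "U' = U ** P" by (simp only: P_def matrix_mul_assoc UUt matrix_mul_lid)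
  have PPt: "P ** transpose P = mat 1"
  proof -
    have "P ** transpose P = transpose U ** (U' ** transpose U') ** U"
      by (simp only: P_def matrix_transpose_mul transpose_transpose matrix_mul_assoc)
    then show ?thesis by (simp only: UUt' matrix_mul_rid UtU)
  qed
  have "U' ** ?G' ** transpose U' = U ** (P ** ?G') ** transpose P ** transpose U"
    by (simp only: U'eq matrix_transpose_mul matrix_mul_assoc)
  also have "\<dots> = U ** ?G ** (P ** transpose P) ** transpose U"
    by (simp only: GP[symmetric] matrix_mul_assoc)
  also have "\<dots> = U ** ?G ** transpose U" by (simp only: PPt matrix_mul_rid)
  finally show ?thesis by simp
qed



lemma count_img_univ:
  "real (count (image_mset f (mset_set (UNIV::'a::finite set))) x) = (\<Sum>i\<in>UNIV. if f i = x then 1 else 0)"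
proof -
  have "count (image_mset f (mset_set (UNIV::'a set))) x = (\<Sum>y\<in>f -` {x}. 1)"
    by (simp add: count_image_mset)
  also have "\<dots> = card (f -` {x})" by simp
  finally have "real (count (image_mset f (mset_set (UNIV::'a set))) x) = real (card (f -` {x}))" by simp
  also have "\<dots> = (\<Sum>i\<in>UNIV. if f i = x then 1 else 0)"
    by (simp add: sum.If_cases vimage_def Collect_conv_if)
  finally show ?thesis .
qed

lemma svd_sq_mset:
  assumes A: "is_svd X U e s V" and B: "is_svd X U' e' s' V'"
  shows "image_mset s (mset_set UNIV) = image_mset s' (mset_set UNIV)"
proof -
  have sq: "image_mset (\<lambda>i. (s i)^2) (mset_set UNIV) = image_mset (\<lambda>i. (s' i)^2) (mset_set UNIV)"
  proof (rule multiset_eqI)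
    fix x
    let ?g = "\<lambda>t::real. if t = x then 1 else (0::real)"
    have "(\<Sum>i\<in>UNIV. ?g ((s i)^2)) = (\<Sum>i\<in>UNIV. ?g ((s' i)^2))"
    proof -
      have "(\<Sum>i\<in>UNIV. ?g ((s i)^2)) = (\<Sum>a\<in>UNIV. (U ** mdiag (\<lambda>i. ?g ((s i)^2)) ** transpose U) $ a $ a)"
        using A by (simp add: trace_conj is_svd_def)
      also have "\<dots> = (\<Sum>a\<in>UNIV. (U' ** mdiag (\<lambda>i. ?g ((s' i)^2)) ** transpose U') $ a $ a)"
        by (simp only: svd_inv[OF A B, of ?g])
      also have "\<dots> = (\<Sum>i\<in>UNIV. ?g ((s' i)^2))"
        using B by (simp add: trace_conj is_svd_def)
      finally show ?thesis .
    qed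
    then have "real (count (image_mset (\<lambda>i. (s i)^2) (mset_set UNIV)) x) =
               real (count (image_mset (\<lambda>i. (s' i)^2) (mset_set UNIV)) x)"
      by (simp only: count_img_univ)
    then show "count (image_mset (\<lambda>i. (s i)^2) (mset_set UNIV)) x =
               count (image_mset (\<lambda>i. (s' i)^2) (mset_set UNIV)) x" by simp
  qed
  have s0: "\<forall>i. 0 \<le> s i" and s0': "\<forall>i. 0 \<le> s' i" using A B by (auto simp: is_svd_def)
  have "image_mset s (mset_set UNIV) = image_mset sqrt (image_mset (\<lambda>i. (s i)^2) (mset_set UNIV))"
    using s0 by (simp add: multiset.map_comp o_def)
  also have "\<dots> = image_mset sqrt (image_mset (\<lambda>i. (s' i)^2) (mset_set UNIV))" by (simp only: sq)
  also have "\<dots> = image_mset s' (mset_set UNIV)"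
    using s0' by (simp add: multiset.map_comp o_def)
  finally show ?thesis .
qed

lemma sing_vals_eq:
  assumes A: "is_svd X U e s V"
  shows "sing_vals X = image_mset s (mset_set UNIV)"
  unfolding sing_vals_def
proof (rule the1_equality)
  show "\<exists>!M. \<exists>U e s V. is_svd X U e s V \<and> M = image_mset s (mset_set UNIV)"
    using A svd_sq_mset by blast
  show "\<exists>U' e' s' V'. is_svd X U' e' s' V' \<and> image_mset s (mset_set UNIV) = image_mset s' (mset_set UNIV)"
    using A by blast
qed

lemma trunc_form:
  assumes A: "is_svd X U e s V"
  shows "U ** rdiag e (\<lambda>i. if r * s i > c then s i else 0) ** transpose V =
         U ** mdiag (\<lambda>i. (\<lambda>t. if r * sqrt t > c then 1 else 0) ((s i)^2)) ** transpose U ** X"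
proof -
  let ?G = "mdiag (\<lambda>i. (\<lambda>t. if r * sqrt t > c then 1 else 0) ((s i)^2))"
  have s0: "\<forall>i. 0 \<le> s i" and X: "X = U ** rdiag e s ** transpose V" and UtU: "transpose U ** U = mat 1"
    using A by (auto simp: is_svd_def orthogonal_matrix_def)
  have R: "rdiag e (\<lambda>i. if r * s i > c then s i else 0) = ?G ** rdiag e s"
    using s0 by (simp add: vec_eq_iff mul_mdiag_left rdiag_def)
  have "U ** ?G ** transpose U ** X = U ** ?G ** (transpose U ** U) ** rdiag e s ** transpose V"
    by (simp only: X matrix_mul_assoc)
  also have "\<dots> = U ** (?G ** rdiag e s) ** transpose V" by (simp only: UtU matrix_mul_rid matrix_mul_assoc)
  finally show ?thesis by (simp only: R)
qed

lemma trunc_eq: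
  assumes A: "is_svd X U e s V"
  shows "trunc_mat c r X = U ** rdiag e (\<lambda>i. if r * s i > c then s i else 0) ** transpose V"
  unfolding trunc_mat_def
proof (rule the1_equality)
  show "\<exists>!Z. \<exists>U e s V. is_svd X U e s V \<and> Z = U ** rdiag e (\<lambda>i. if r * s i > c then s i else 0) ** transpose V"
  proof (rule ex_ex1I)
    show "\<exists>Z U e s V. is_svd X U e s V \<and> Z = U ** rdiag e (\<lambda>i. if r * s i > c then s i else 0) ** transpose V"
      using A by blast
    fix Z1 Z2
    assume "\<exists>U e s V. is_svd X U e s V \<and> Z1 = U ** rdiag e (\<lambda>i. if r * s i > c then s i else 0) ** transpose V"
       and "\<exists>U e s V. is_svd X U e s V \<and> Z2 = U ** rdiag e (\<lambda>i. if r * s i > c then s i else 0) ** transpose V"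
    then obtain U1 e1 s1 V1 U2 e2 s2 V2 where
      1: "is_svd X U1 e1 s1 V1" "Z1 = U1 ** rdiag e1 (\<lambda>i. if r * s1 i > c then s1 i else 0) ** transpose V1"
      and 2: "is_svd X U2 e2 s2 V2" "Z2 = U2 ** rdiag e2 (\<lambda>i. if r * s2 i > c then s2 i else 0) ** transpose V2"
      by blast
    define g where "g = (\<lambda>t::real. if r * sqrt t > c then 1 else (0::real))"
    have z1: "Z1 = U1 ** mdiag (\<lambda>i. g ((s1 i)^2)) ** transpose U1 ** X"
      using 1 trunc_form[OF 1(1), where r=r and c=c] by (simp add: g_def)
    have z2: "Z2 = U2 ** mdiag (\<lambda>i. g ((s2 i)^2)) ** transpose U2 ** X"
      using 2 trunc_form[OF 2(1), where r=r and c=c] by (simp add: g_def)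
    show "Z1 = Z2" using svd_inv[OF 1(1) 2(1), of g] z1 z2 by simp
  qed
  show "\<exists>U' e' s' V'. is_svd X U' e' s' V' \<and>
     U ** rdiag e (\<lambda>i. if r * s i > c then s i else 0) ** transpose V =
     U' ** rdiag e' (\<lambda>i. if r * s' i > c then s' i else 0) ** transpose V'"
    using A by blast
qed



lemma usv_entry:
  "(U ** rdiag e c ** transpose V) $ a $ b = (\<Sum>i\<in>UNIV. U $ a $ i * c i * V $ b $ (e i))"
proof -
  have "(U ** rdiag e c ** transpose V) $ a $ b =
        (\<Sum>j\<in>UNIV. (\<Sum>k\<in>UNIV. U $ a $ k * (if j = e k then c k else 0)) * V $ b $ j)"
    by (simp add: matrix_matrix_mult_def rdiag_def transpose_def)
  also have "\<dots> = (\<Sum>j\<in>UNIV. \<Sum>k\<in>UNIV. if j = e k then U $ a $ k * c k * V $ b $ j else 0)"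
    by (simp add: sum_distrib_right if_distrib if_distribR cong: if_cong)
  also have "\<dots> = (\<Sum>k\<in>UNIV. \<Sum>j\<in>UNIV. if j = e k then U $ a $ k * c k * V $ b $ j else 0)"
    by (rule sum.swap)
  also have "\<dots> = (\<Sum>i\<in>UNIV. U $ a $ i * c i * V $ b $ (e i))"
    by (simp add: sum.delta')
  finally show ?thesis .
qed

lemma usv_diff:
  "U ** rdiag e a ** transpose V - U ** rdiag e b ** transpose V = U ** rdiag e (\<lambda>i. a i - b i) ** transpose V"
  by (simp add: vec_eq_iff usv_entry sum_subtractf[symmetric] algebra_simps)

lemma norm_usv:
  fixes U :: "real^'n1^'n1" and V :: "real^'n2^'n2"
  assumes oU: "orthogonal_matrix U" and oV: "orthogonal_matrix V"
  shows "norm (U ** rdiag e c ** transpose V) \<le> (\<Sum>i\<in>UNIV. \<bar>c i\<bar>)"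
proof -
  define Om where "Om = (\<lambda>i. (\<chi> a b. U $ a $ i * c i * V $ b $ (e i)) :: real^'n2^'n1)"
  have eq: "U ** rdiag e c ** transpose V = (\<Sum>i\<in>UNIV. Om i)"
    by (simp add: vec_eq_iff usv_entry Om_def sum_component)
  have nO: "norm (Om i) = \<bar>c i\<bar>" for i
  proof -
    have cu: "norm (column i U) = 1" and cv: "norm (column (e i) V) = 1"
      using oU oV by (auto simp: orthogonal_matrix_orthonormal_columns)
    have row: "Om i $ a = (U $ a $ i * c i) *\<^sub>R column (e i) V" for a
      by (simp add: Om_def vec_eq_iff column_def)
    have "norm (Om i) = L2_set (\<lambda>a. norm (Om i $ a)) UNIV" by (simp add: norm_vec_def)
    also have "\<dots> = L2_set (\<lambda>a. \<bar>c i\<bar> * \<bar>U $ a $ i\<bar>) UNIV"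
      by (simp add: row cv abs_mult mult.commute)
    also have "\<dots> = \<bar>c i\<bar> * L2_set (\<lambda>a. \<bar>U $ a $ i\<bar>) UNIV"
      by (simp add: L2_set_right_distrib)
    also have "L2_set (\<lambda>a. \<bar>U $ a $ i\<bar>) UNIV = norm (column i U)"
      by (simp add: norm_vec_def column_def)
    finally show ?thesis using cu by simp
  qed
  have "norm (\<Sum>i\<in>UNIV. Om i) \<le> (\<Sum>i\<in>UNIV. norm (Om i))" by (rule norm_sum)
  then show ?thesis using eq nO by simp
qed

lemma norm_l1:
  fixes Y :: "real^'n2^'n1"
  shows "norm Y \<le> (\<Sum>i\<in>UNIV. \<Sum>j\<in>UNIV. \<bar>Y $ i $ j\<bar>)"
proof -
  have "norm Y = L2_set (\<lambda>i. norm (Y $ i)) UNIV" by (simp add: norm_vec_def)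
  also have "\<dots> \<le> (\<Sum>i\<in>UNIV. norm (Y $ i))" by (rule L2_set_le_sum) simp
  also have "\<dots> \<le> (\<Sum>i\<in>UNIV. \<Sum>j\<in>UNIV. \<bar>Y $ i $ j\<bar>)"
    by (rule sum_mono) (rule norm_le_l1_cart)
  finally show ?thesis .
qed

lemma rank_orth_mul:
  fixes U :: "real^'n1^'n1" and V :: "real^'n2^'n2" and M :: "real^'n2^'n1"
  assumes oU: "orthogonal_matrix U" and oV: "orthogonal_matrix V"
  shows "rank (U ** M ** transpose V) = rank M"
proof (rule antisym)
  show "rank (U ** M ** transpose V) \<le> rank M"
    by (meson order_trans rank_mul_le_left rank_mul_le_right)
  have UtU: "transpose U ** U = mat 1" and VtV: "transpose V ** V = mat 1"
    using oU oV by (auto simp: orthogonal_matrix_def)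
  have "M = transpose U ** (U ** M ** transpose V) ** V"
    by (simp only: matrix_mul_assoc UtU matrix_mul_lid) (simp only: matrix_mul_assoc[symmetric] VtV matrix_mul_rid)
  then have "rank M = rank (transpose U ** (U ** M ** transpose V) ** V)" by simp
  also have "\<dots> \<le> rank (U ** M ** transpose V)"
    by (meson order_trans rank_mul_le_left rank_mul_le_right)
  finally show "rank M \<le> rank (U ** M ** transpose V)" .
qed

lemma rank_rdiag:
  assumes e: "inj e"
  shows "rank (rdiag e s :: real^'n2^'n1) = card {i. s i \<noteq> 0}"
proof -
  let ?R = "rdiag e s :: real^'n2^'n1"
  let ?N = "{i. s i \<noteq> 0}"
  let ?Rn = "(\<lambda>i. ?R $ i) ` ?N"
  have rowR: "row i ?R = ?R $ i" for i by (simp add: row_def vec_lambda_eta)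
  have rows: "rows ?R = (\<lambda>i. ?R $ i) ` UNIV" by (auto simp: rows_def rowR)
  have z: "?R $ i = 0" if "s i = 0" for i using that by (simp add: vec_eq_iff rdiag_def)
  have "span (rows ?R) = span ?Rn"
  proof -
    have "rows ?R \<subseteq> insert 0 ?Rn" using z by (auto simp: rows)
    moreover have "?Rn \<subseteq> rows ?R" by (auto simp: rows)
    ultimately show ?thesis
      by (metis span_insert_0 span_mono subset_antisym span_span)
  qed
  then have "rank ?R = dim ?Rn" by (metis row_rank_def dim_span)
  also have "\<dots> = card ?Rn"
  proof (rule dim_eq_card_independent)
    have inn: "inner (?R $ i) (?R $ j) = (if i = j then (s i)^2 else 0)" for i j
      using arg_cong[OF rdiag_rdiagT[OF e, of s], of "\<lambda>Z. Z $ i $ j"] by (simp add: mmt_entry mdiag_def)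
    have "pairwise orthogonal ?Rn"
      unfolding pairwise_def orthogonal_def
      by (auto simp: inn)
    moreover have "0 \<notin> ?Rn"
    proof
      assume "0 \<in> ?Rn"
      then obtain i where i: "s i \<noteq> 0" "?R $ i = 0" by auto
      then have "inner (?R $ i) (?R $ i) = 0" by simp
      with inn[of i i] i(1) show False by simp
    qed
    ultimately show "independent ?Rn" by (simp add: pairwise_orthogonal_independent)
  qed
  also have "\<dots> = card ?N"
  proof (rule card_image)
    show "inj_on (\<lambda>i. ?R $ i) ?N"
    proof (rule inj_onI)
      fix i j assume "i \<in> ?N" "j \<in> ?N" "?R $ i = ?R $ j"
      then have "?R $ i $ e i = ?R $ j $ e i" by simp
      then show "i = j" using \<open>i \<in> ?N\<close> e by (auto simp: rdiag_def inj_def split: if_splits)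
    qed
  qed
  finally show ?thesis .
qed

lemma rank_svd:
  assumes A: "is_svd X U e s V"
  shows "rank X = card {i. s i \<noteq> 0}"
proof -
  have oU: "orthogonal_matrix U" and oV: "orthogonal_matrix V" and e: "inj e"
    and X: "X = U ** rdiag e s ** transpose V" using A by (auto simp: is_svd_def)
  show ?thesis unfolding X by (simp only: rank_orth_mul[OF oU oV] rank_rdiag[OF e])
qed



lemma phi_facts:
  assumes phi: "in_Phi phi tstar"
  shows "\<And>t. t \<in> {0..1} \<Longrightarrow> phi t = ereal (real_of_ereal (phi t))"
    and "\<And>t. t \<in> {0..1} \<Longrightarrow> 0 \<le> real_of_ereal (phi t)"
    and "real_of_ereal (phi 1) = 1" and "real_of_ereal (phi tstar) = 0"
    and "0 \<le> tstar" "tstar < 1"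
    and "convex_on {0..1} (\<lambda>t. real_of_ereal (phi t))"
proof -
  have P: "proper_fun phi" "{0..1} \<subseteq> interior {x. phi x \<noteq> \<infinity>}"
    "phi tstar = 0" "\<forall>t\<in>{0..1}. phi tstar \<le> phi t" "phi 1 = 1" "0 \<le> tstar" "tstar < 1"
    "convex_on {0..1} (\<lambda>t. real_of_ereal (phi t))"
    using phi by (auto simp: in_Phi_def)
  show fin: "phi t = ereal (real_of_ereal (phi t))" if "t \<in> {0..1}" for t
  proof -
    have "phi t \<noteq> \<infinity>" using P(2) that interior_subset by blast
    moreover have "phi t \<noteq> -\<infinity>" using P(1) by (simp add: proper_fun_def)
    ultimately show ?thesis by (cases "phi t") auto
  qed
  show "0 \<le> real_of_ereal (phi t)" if "t \<in> {0..1}" for t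
    using P(3,4) that fin[OF that] by (metis ereal_less_eq(5) zero_ereal_def)
  show "real_of_ereal (phi 1) = 1" using P(5) by simp
  show "real_of_ereal (phi tstar) = 0" using P(3) by simp
  show "0 \<le> tstar" "tstar < 1" "convex_on {0..1} (\<lambda>t. real_of_ereal (phi t))" using P by auto
qed

lemma tangent_at_1:
  fixes pr :: "real \<Rightarrow> real"
  assumes cvx: "convex_on {0..1} pr" and dphi: "(pr has_real_derivative d) (at_left 1)"
    and t: "t \<in> {0..1}"
  shows "pr t \<ge> pr 1 - d * (1 - t)"
proof (cases "t = 1")
  case True then show ?thesis by simp
next
  case False
  then have t1: "t < 1" using t by simp
  have lim: "((\<lambda>y. (pr y - pr 1) / (y - 1)) \<longlongrightarrow> d) (at_left 1)"
    using dphi by (simp add: has_field_derivative_iff)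
  have ev: "eventually (\<lambda>y. (pr 1 - pr t) / (1 - t) \<le> (pr y - pr 1) / (y - 1)) (at_left 1)"
    using eventually_at_left_real[OF t1]
  proof eventually_elim
    case (elim y)
    then have y: "t < y" "y < 1" by auto
    define l where "l = (y - t) / (1 - t)"
    have l: "0 \<le> l" "l \<le> 1" using y t1 by (auto simp: l_def field_simps)
    have lt: "l * (1 - t) = y - t" unfolding l_def using t1 by simp
    have yeq: "(1 - l) *\<^sub>R t + l *\<^sub>R 1 = y" using lt by (simp add: algebra_simps)
    have "pr ((1 - l) *\<^sub>R t + l *\<^sub>R 1) \<le> (1 - l) * pr t + l * pr 1"
      using convex_onD[OF cvx l, of t 1] t by simp
    then have c: "pr y \<le> (1 - l) * pr t + l * pr 1" by (simp only: yeq)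
    have e1: "(1 - t) * (1 - l) = 1 - y" using lt by (simp add: algebra_simps)
    have e2: "(1 - t) * l = y - t" using lt by (simp add: mult.commute)
    have "(1-t) * pr y \<le> (1-t) * ((1 - l) * pr t + l * pr 1)" using c t1 by (simp add: mult_left_mono)
    also have "\<dots> = ((1-t)*(1-l)) * pr t + ((1-t)*l) * pr 1" by (simp add: algebra_simps)
    also have "\<dots> = (1-y)*pr t + (y-t)*pr 1" by (simp only: e1 e2)
    finally have c2: "(1-t) * pr y \<le> (1-y)*pr t + (y-t)*pr 1" .
    have "(pr 1 - pr t) * (1 - y) \<le> (pr 1 - pr y) * (1 - t)"
      using c2 by (simp add: algebra_simps)
    then have "(pr 1 - pr t) / (1 - t) \<le> (pr 1 - pr y) / (1 - y)"
      using y t1 by (simp add: divide_simps mult.commute)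
    also have "(pr 1 - pr y) / (1 - y) = (pr y - pr 1) / (y - 1)"
      by (simp add: divide_simps) (simp add: algebra_simps)
    finally show ?case .
  qed
  have "(pr 1 - pr t) / (1 - t) \<le> d"
    by (rule tendsto_lowerbound[OF lim ev]) simp
  then show ?thesis using t1 by (simp add: divide_simps algebra_simps)
qed



definition Hf :: "(real \<Rightarrow> ereal) \<Rightarrow> real \<Rightarrow> real" where
  "Hf phi a = a - real_of_ereal (psi_conj phi a)"

lemma psi_conj_upper:
  assumes phi: "in_Phi phi tstar" and B: "\<And>t. t \<in> {0..1} \<Longrightarrow> a * t - real_of_ereal (phi t) \<le> B"
  shows "psi_conj phi a \<le> ereal B"
  unfolding psi_conj_def
proof (rule SUP_least)
  fix t :: real
  show "ereal (a * t) - psi phi t \<le> ereal B"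
  proof (cases "t \<in> {0..1}")
    case True
    then have "psi phi t = ereal (real_of_ereal (phi t))"
      using phi_facts(1)[OF phi True] by (simp add: psi_def)
    then show ?thesis using B[OF True] by simp
  next
    case False
    then have "psi phi t = \<infinity>" by (simp only: psi_def if_not_P[OF False] if_False)
    then show ?thesis by simp
  qed
qed

lemma psi_conj_lower:
  assumes phi: "in_Phi phi tstar" and t: "t \<in> {0..1}"
  shows "ereal (a * t - real_of_ereal (phi t)) \<le> psi_conj phi a"
proof -
  have "psi phi t = ereal (real_of_ereal (phi t))"
    using phi_facts(1)[OF phi t] t by (simp add: psi_def)
  then have "ereal (a * t - real_of_ereal (phi t)) = ereal (a * t) - psi phi t" by simp
  also have "\<dots> \<le> psi_conj phi a" unfolding psi_conj_def by (rule SUP_upper) simp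
  finally show ?thesis .
qed

lemma psi_conj_fin:
  assumes phi: "in_Phi phi tstar"
  shows "psi_conj phi a = ereal (a - Hf phi a)"
proof -
  have "psi_conj phi a \<le> ereal \<bar>a\<bar>"
  proof (rule psi_conj_upper[OF phi])
    fix t :: real assume t: "t \<in> {0..1}"
    have "a * t \<le> \<bar>a * t\<bar>" by simp
    also have "\<dots> = \<bar>a\<bar> * \<bar>t\<bar>" by (simp add: abs_mult)
    also have "\<dots> \<le> \<bar>a\<bar> * 1" using t by (intro mult_left_mono) auto
    finally have "a * t \<le> \<bar>a\<bar>" by simp
    then show "a * t - real_of_ereal (phi t) \<le> \<bar>a\<bar>" using phi_facts(2)[OF phi t] by simp
  qed
  moreover have "ereal (a * 1 - real_of_ereal (phi 1)) \<le> psi_conj phi a"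
    by (rule psi_conj_lower[OF phi]) simp
  ultimately have "psi_conj phi a \<noteq> \<infinity>" "psi_conj phi a \<noteq> -\<infinity>" by auto
  then show ?thesis by (cases "psi_conj phi a") (auto simp: Hf_def)
qed

context
  fixes phi :: "real \<Rightarrow> ereal" and tstar d :: real
  assumes phi: "in_Phi phi tstar"
    and dphi: "((\<lambda>t. real_of_ereal (phi t)) has_real_derivative d) (at_left 1)"
begin

lemma tang: "t \<in> {0..1} \<Longrightarrow> real_of_ereal (phi t) \<ge> 1 - d * (1 - t)"
  using tangent_at_1[OF phi_facts(7)[OF phi] dphi, of t] phi_facts(3)[OF phi] by simp

lemma d_pos: "d * (1 - tstar) \<ge> 1" "d > 0"
proof -
  have ts: "tstar \<in> {0..1}" using phi_facts(5,6)[OF phi] by simp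
  show 1: "d * (1 - tstar) \<ge> 1" using tang[OF ts] phi_facts(4)[OF phi] by simp
  show "d > 0"
  proof (rule ccontr)
    assume "\<not> d > 0"
    then have "d * (1 - tstar) \<le> 0" using phi_facts(6)[OF phi] by (simp add: mult_nonpos_nonneg)
    then show False using 1 by simp
  qed
qed

lemma H0: "Hf phi 0 = 0"
proof -
  have "psi_conj phi 0 \<le> ereal 0"
    by (rule psi_conj_upper[OF phi]) (use phi_facts(2)[OF phi] in simp)
  moreover have "ereal (0 * tstar - real_of_ereal (phi tstar)) \<le> psi_conj phi 0"
    by (rule psi_conj_lower[OF phi]) (use phi_facts(5,6)[OF phi] in simp)
  ultimately have "psi_conj phi 0 = 0" using phi_facts(4)[OF phi] by (simp add: zero_ereal_def)
  then show ?thesis by (simp add: Hf_def)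
qed

lemma H_le1: "Hf phi a \<le> 1"
proof -
  have "ereal (a * 1 - real_of_ereal (phi 1)) \<le> psi_conj phi a"
    by (rule psi_conj_lower[OF phi]) simp
  then show ?thesis using psi_conj_fin[OF phi, of a] phi_facts(3)[OF phi] by simp
qed

lemma H_ge: assumes a: "0 \<le> a" shows "min 1 (a / d) \<le> Hf phi a"
proof -
  have dp: "d > 0" by (rule d_pos(2))
  have "psi_conj phi a \<le> ereal (a - min 1 (a / d))"
  proof (rule psi_conj_upper[OF phi])
    fix t :: real assume t: "t \<in> {0..1}"
    have tg: "real_of_ereal (phi t) \<ge> 1 - d * (1 - t)" by (rule tang[OF t])
    have nn: "real_of_ereal (phi t) \<ge> 0" by (rule phi_facts(2)[OF phi t])
    show "a * t - real_of_ereal (phi t) \<le> a - min 1 (a / d)"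
    proof (cases "d \<le> a")
      case True
      then have "min 1 (a / d) = 1" using dp by (simp add: min_def field_simps)
      moreover have "a * (1 - t) \<ge> d * (1 - t)" using True t by (simp add: mult_right_mono)
      ultimately show ?thesis using tg by (simp add: algebra_simps)
    next
      case False
      then have m: "min 1 (a / d) = a / d" using dp by (simp add: min_def field_simps)
      show ?thesis
      proof (cases "t - 1 + 1 / d \<le> 0")
        case True
        then have "a * (t - 1 + 1 / d) \<le> 0" using a by (simp add: mult_nonneg_nonpos)
        then show ?thesis using nn m by (simp add: algebra_simps)
      next
        case F2: False
        have "a * (t - 1 + 1 / d) \<le> d * (t - 1 + 1 / d)"
          using F2 False by (intro mult_right_mono) auto
        also have "d * (t - 1 + 1 / d) = 1 - d * (1 - t)" using dp by (simp add: field_simps)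
        finally show ?thesis using tg m by (simp add: algebra_simps)
      qed
    qed
  qed
  then show ?thesis using psi_conj_fin[OF phi, of a] by simp
qed

lemma H_one: assumes "d \<le> a" shows "Hf phi a = 1"
proof -
  have "a / d \<ge> 1" using assms d_pos(2) by simp
  then show ?thesis using H_ge[of a] H_le1[of a] assms d_pos(2) by (simp add: min_def)
qed

lemma H_nonneg: assumes "0 \<le> a" shows "0 \<le> Hf phi a"
proof -
  have "0 \<le> a / d" using assms d_pos(2) by simp
  then have "0 \<le> min 1 (a / d)" by simp
  then show ?thesis using H_ge[OF assms] by linarith
qed

lemma t0_ge:
  assumes t0: "0 \<le> t0" "t0 < 1" "1 / (1 - tstar) \<in> subdiff_psi phi t0"
  shows "tstar \<le> t0"
proof -
  have ts: "tstar \<in> {0..1}" using phi_facts(5,6)[OF phi] by simp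
  have t0i: "t0 \<in> {0..1}" using t0 by simp
  have "psi phi tstar \<ge> psi phi t0 + ereal (1 / (1 - tstar) * (tstar - t0))"
    using t0(3) by (simp add: subdiff_psi_def)
  moreover have "psi phi tstar = ereal 0" using ts phi_facts(1)[OF phi ts] phi_facts(4)[OF phi] by (simp add: psi_def)
  moreover have "psi phi t0 = ereal (real_of_ereal (phi t0))"
    using t0i phi_facts(1)[OF phi t0i] by (simp add: psi_def)
  ultimately have "0 \<ge> real_of_ereal (phi t0) + 1 / (1 - tstar) * (tstar - t0)" by simp
  then have "1 / (1 - tstar) * (tstar - t0) \<le> 0" using phi_facts(2)[OF phi t0i] by simp
  moreover have "1 / (1 - tstar) > 0" using phi_facts(6)[OF phi] by simp
  ultimately show ?thesis using phi_facts(6)[OF phi] by (auto simp: divide_le_0_iff)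
qed

end



lemma argmin_transfer:
  fixes F G :: "'a \<Rightarrow> ereal"
  assumes le: "\<And>p. p \<in> Om \<Longrightarrow> G p \<le> F p"
    and tr: "\<And>p. p \<in> Om \<Longrightarrow> \<exists>q\<in>Om. G q = F q \<and> G q \<le> G p \<and> (G p = F p \<or> G q < G p)"
  shows "argmin_on Om F = argmin_on Om G"
proof
  show "argmin_on Om F \<subseteq> argmin_on Om G"
  proof
    fix p assume p: "p \<in> argmin_on Om F"
    have "G p \<le> G p'" if p': "p' \<in> Om" for p'
    proof -
      obtain q where q: "q \<in> Om" "G q = F q" "G q \<le> G p'" using tr[OF p'] by blast
      have "G p \<le> F p" using le p by (simp add: argmin_on_def)
      also have "\<dots> \<le> F q" using p q(1) by (simp add: argmin_on_def)
      also have "\<dots> \<le> G p'" using q by simp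
      finally show ?thesis .
    qed
    then show "p \<in> argmin_on Om G" using p by (simp add: argmin_on_def)
  qed
  show "argmin_on Om G \<subseteq> argmin_on Om F"
  proof
    fix p assume p: "p \<in> argmin_on Om G"
    then have pO: "p \<in> Om" by (simp add: argmin_on_def)
    obtain q where q: "q \<in> Om" "G q = F q" "G q \<le> G p" "G p = F p \<or> G q < G p" using tr[OF pO] by blast
    have "\<not> G q < G p" using p q(1) by (auto simp: argmin_on_def not_less)
    then have Fp: "F p = G p" using q(4) by simp
    have "F p \<le> F p'" if p': "p' \<in> Om" for p'
    proof -
      have "F p = G p" by (rule Fp)
      also have "\<dots> \<le> G p'" using p p' by (simp add: argmin_on_def)
      also have "\<dots> \<le> F p'" using le[OF p'] .
      finally show ?thesis .
    qed
    then show "p \<in> argmin_on Om F" using pO by (simp add: argmin_on_def)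
  qed
qed

lemma sum_ind_card: "finite A \<Longrightarrow> (\<Sum>a\<in>A. if P a then 1 else 0) = real (card {a\<in>A. P a})"
  by (simp add: sum.inter_filter[symmetric])

lemma sumH_le_card:
  assumes "\<And>x. h x \<le> (1::real)" "h 0 = 0" "finite A"
  shows "(\<Sum>a\<in>A. h (g a)) \<le> real (card {a\<in>A. g a \<noteq> 0})"
proof -
  have "(\<Sum>a\<in>A. h (g a)) \<le> (\<Sum>a\<in>A. if g a \<noteq> 0 then 1 else 0)"
    using assms(1,2) by (intro sum_mono) auto
  also have "\<dots> = real (card {a\<in>A. g a \<noteq> 0})" using assms(3) by (rule sum_ind_card)
  finally show ?thesis .
qed

lemma sumH_eq_card:
  assumes "\<And>a. a \<in> A \<Longrightarrow> g a \<noteq> 0 \<Longrightarrow> h (g a) = (1::real)" "h 0 = 0" "finite A"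
  shows "(\<Sum>a\<in>A. h (g a)) = real (card {a\<in>A. g a \<noteq> 0})"
proof -
  have "(\<Sum>a\<in>A. h (g a)) = (\<Sum>a\<in>A. if g a \<noteq> 0 then 1 else 0)"
    using assms(1,2) by (intro sum.cong) auto
  also have "\<dots> = real (card {a\<in>A. g a \<noteq> 0})" using assms(3) by (rule sum_ind_card)
  finally show ?thesis .
qed

lemma double_sum_pairs:
  "(\<Sum>i\<in>(UNIV::'a::finite set). \<Sum>j\<in>(UNIV::'b::finite set). k i j) = (\<Sum>p\<in>UNIV. k (fst p) (snd p))"
  by (simp add: sum.cartesian_product case_prod_beta UNIV_Times_UNIV[symmetric] del: UNIV_Times_UNIV)

lemma l0_pairs: "l0_norm Y = card {p\<in>UNIV. Y $ fst p $ snd p \<noteq> 0}"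
  unfolding l0_norm_def by (rule arg_cong[where f=card]) auto

lemma objF:
  assumes "is_svd X U e s V" "f (X, Y) = ereal v"
  shows "ereal nu * f (X, Y) + ereal (real (rank X) + lam * real (l0_norm Y)) =
         ereal (nu * v + real (card {i. s i \<noteq> 0}) + lam * real (l0_norm Y))"
  using assms rank_svd[OF assms(1)] by simp

lemma objG:
  assumes phi: "in_Phi phi tstar" and A: "is_svd X U e s V" and fv: "f (X, Y) = ereal v"
  shows "ereal nu * f (X, Y) + ereal (rho * nuc_norm X)
            - (\<Sum>\<^sub># (image_mset (\<lambda>s. psi_conj phi (rho * s)) (sing_vals X)))
            + ereal (rho * lam * l1_norm Y)
            - ereal lam * (\<Sum>i\<in>UNIV. \<Sum>j\<in>UNIV. psi_conj phi (rho * \<bar>Y $ i $ j\<bar>))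
       = ereal (nu * v + (\<Sum>i\<in>UNIV. Hf phi (rho * s i))
            + lam * (\<Sum>i\<in>UNIV. \<Sum>j\<in>UNIV. Hf phi (rho * \<bar>Y $ i $ j\<bar>)))"
proof -
  have sv: "sing_vals X = image_mset s (mset_set UNIV)" by (rule sing_vals_eq[OF A])
  have nuc: "nuc_norm X = (\<Sum>i\<in>UNIV. s i)"
    by (simp add: nuc_norm_def sv sum_unfold_sum_mset)
  have ps: "(\<Sum>\<^sub># (image_mset (\<lambda>s. psi_conj phi (rho * s)) (sing_vals X)))
          = ereal (\<Sum>i\<in>UNIV. rho * s i - Hf phi (rho * s i))"
  proof -
    have "(\<Sum>\<^sub># (image_mset (\<lambda>s. psi_conj phi (rho * s)) (sing_vals X)))
        = (\<Sum>i\<in>UNIV. psi_conj phi (rho * s i))"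
      by (simp add: sv multiset.map_comp o_def sum_unfold_sum_mset)
    also have "\<dots> = (\<Sum>i\<in>UNIV. ereal (rho * s i - Hf phi (rho * s i)))"
      by (simp add: psi_conj_fin[OF phi])
    finally show ?thesis by simp
  qed
  have py: "(\<Sum>i\<in>UNIV. \<Sum>j\<in>UNIV. psi_conj phi (rho * \<bar>Y $ i $ j\<bar>))
          = ereal (\<Sum>i\<in>UNIV. \<Sum>j\<in>UNIV. rho * \<bar>Y $ i $ j\<bar> - Hf phi (rho * \<bar>Y $ i $ j\<bar>))"
    by (simp add: psi_conj_fin[OF phi])
  show ?thesis
    unfolding ps py nuc fv l1_norm_def
    by (simp add: sum_subtractf sum_distrib_left algebra_simps)
qed



definition FRv :: "real \<Rightarrow> real \<Rightarrow> ((real^'n2^'n1) \<times> (real^'n2^'n1) \<Rightarrow> ereal)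
    \<Rightarrow> (real^'n2^'n1) \<times> (real^'n2^'n1) \<Rightarrow> real" where
  "FRv nu lam f p = nu * real_of_ereal (f p) + real (rank (fst p)) + lam * real (l0_norm (snd p))"

definition GRv :: "(real \<Rightarrow> ereal) \<Rightarrow> real \<Rightarrow> real \<Rightarrow> real \<Rightarrow> ((real^'n2^'n1) \<times> (real^'n2^'n1) \<Rightarrow> ereal)
    \<Rightarrow> (real^'n2^'n1) \<times> (real^'n2^'n1) \<Rightarrow> real" where
  "GRv phi nu lam rho f p = nu * real_of_ereal (f p)
      + sum_mset (image_mset (\<lambda>x. Hf phi (rho * x)) (sing_vals (fst p)))
      + lam * (\<Sum>i\<in>UNIV. \<Sum>j\<in>UNIV. Hf phi (rho * \<bar>snd p $ i $ j\<bar>))"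

lemma GRv_svd:
  assumes "is_svd X U e s V"
  shows "GRv phi nu lam rho f (X, Y) = nu * real_of_ereal (f (X, Y)) + (\<Sum>i\<in>UNIV. Hf phi (rho * s i))
      + lam * (\<Sum>i\<in>UNIV. \<Sum>j\<in>UNIV. Hf phi (rho * \<bar>Y $ i $ j\<bar>))"
  by (simp add: GRv_def sing_vals_eq[OF assms] multiset.map_comp o_def sum_unfold_sum_mset)

context
  fixes phi :: "real \<Rightarrow> ereal" and tstar d :: real
  assumes phi: "in_Phi phi tstar"
    and dphi: "((\<lambda>t. real_of_ereal (phi t)) has_real_derivative d) (at_left 1)"
begin

lemma le_gen:
  assumes A: "is_svd X U e s V" and lam: "lam > 0"
  shows "GRv phi nu lam rho f (X, Y) \<le> FRv nu lam f (X, Y)"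
proof -
  let ?H = "Hf phi"
  have H0: "?H 0 = 0" using H0[OF phi dphi] .
  have Hle: "\<And>a. ?H a \<le> 1" using H_le1[OF phi dphi] .
  have 1: "(\<Sum>i\<in>UNIV. ?H (rho * s i)) \<le> real (card {i. s i \<noteq> 0})"
    using sumH_le_card[of "\<lambda>x. ?H (rho * x)" UNIV s] Hle H0 by simp
  have 2: "(\<Sum>i\<in>UNIV. \<Sum>j\<in>UNIV. ?H (rho * \<bar>Y $ i $ j\<bar>)) \<le> real (l0_norm Y)"
  proof -
    have "(\<Sum>i\<in>UNIV. \<Sum>j\<in>UNIV. ?H (rho * \<bar>Y $ i $ j\<bar>)) = (\<Sum>p\<in>UNIV. ?H (rho * \<bar>Y $ fst p $ snd p\<bar>))"
      by (rule double_sum_pairs)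
    also have "\<dots> \<le> real (card {p\<in>UNIV. Y $ fst p $ snd p \<noteq> 0})"
      using sumH_le_card[of "\<lambda>x. ?H (rho * \<bar>x\<bar>)" UNIV "\<lambda>p. Y $ fst p $ snd p"] Hle H0 by simp
    finally show ?thesis by (simp add: l0_pairs)
  qed
  have 3: "lam * (\<Sum>i\<in>UNIV. \<Sum>j\<in>UNIV. ?H (rho * \<bar>Y $ i $ j\<bar>)) \<le> lam * real (l0_norm Y)"
    using 2 lam by (intro mult_left_mono) auto
  show ?thesis using 1 3 rank_svd[OF A] by (simp add: GRv_svd[OF A] FRv_def)
qed

lemma eq_gen:
  assumes A: "is_svd X U e s V"
    and ks: "\<And>i. s i \<noteq> 0 \<Longrightarrow> d \<le> rho * s i"
    and ky: "\<And>i j. Y $ i $ j \<noteq> 0 \<Longrightarrow> d \<le> rho * \<bar>Y $ i $ j\<bar>"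
  shows "GRv phi nu lam rho f (X, Y) = FRv nu lam f (X, Y)"
proof -
  let ?H = "Hf phi"
  have H0: "?H 0 = 0" using H0[OF phi dphi] .
  have Hone: "\<And>a. d \<le> a \<Longrightarrow> ?H a = 1" using H_one[OF phi dphi] .
  have 1: "(\<Sum>i\<in>UNIV. ?H (rho * s i)) = real (card {i. s i \<noteq> 0})"
    using sumH_eq_card[of UNIV s "\<lambda>x. ?H (rho * x)"] Hone ks H0 by simp
  have 2: "(\<Sum>i\<in>UNIV. \<Sum>j\<in>UNIV. ?H (rho * \<bar>Y $ i $ j\<bar>)) = real (l0_norm Y)"
  proof -
    have "(\<Sum>i\<in>UNIV. \<Sum>j\<in>UNIV. ?H (rho * \<bar>Y $ i $ j\<bar>)) = (\<Sum>p\<in>UNIV. ?H (rho * \<bar>Y $ fst p $ snd p\<bar>))"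
      by (rule double_sum_pairs)
    also have "\<dots> = real (card {p\<in>UNIV. Y $ fst p $ snd p \<noteq> 0})"
      using sumH_eq_card[of UNIV "\<lambda>p. Y $ fst p $ snd p" "\<lambda>x. ?H (rho * \<bar>x\<bar>)"] Hone ky H0 by simp
    finally show ?thesis by (simp add: l0_pairs)
  qed
  show ?thesis using 1 2 rank_svd[OF A] by (simp add: GRv_svd[OF A] FRv_def)
qed

end



lemma point_key:
  fixes X Y :: "real^'n2^'n1" and f :: "(real^'n2^'n1) \<times> (real^'n2^'n1) \<Rightarrow> ereal"
  assumes phi: "in_Phi phi tstar"
    and dphi: "((\<lambda>t. real_of_ereal (phi t)) has_real_derivative d) (at_left 1)"
    and nu: "nu > 0" and lam: "lam > 0" and rho0: "rho > 0"
    and cpos: "rho * min 1 lam / d - nu * Lf > 0"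
    and f_lip: "lipschitz_on Lf Omega (\<lambda>p. real_of_ereal (f p))"
    and trunc: "\<forall>X Y r. (X, Y) \<in> Omega \<and> r > 0 \<longrightarrow> (trunc_mat d r X, trunc_ent d r Y) \<in> Omega"
    and pO: "(X, Y) \<in> Omega" and A: "is_svd X U e s V"
  shows "\<exists>q\<in>Omega. GRv phi nu lam rho f q = FRv nu lam f q \<and> GRv phi nu lam rho f q \<le> GRv phi nu lam rho f (X, Y)
           \<and> (GRv phi nu lam rho f (X, Y) = FRv nu lam f (X, Y) \<or> GRv phi nu lam rho f q < GRv phi nu lam rho f (X, Y))"
proof -
  let ?H = "Hf phi"
  let ?m = "min 1 lam"
  have dp: "d > 0" using d_pos(2)[OF phi dphi] .
  have H0: "?H 0 = 0" using H0[OF phi dphi] .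
  have Hge: "\<And>a. 0 \<le> a \<Longrightarrow> min 1 (a / d) \<le> ?H a" using H_ge[OF phi dphi] .
  have s0: "\<And>i. 0 \<le> s i" using A by (simp add: is_svd_def)
  define sq where "sq = (\<lambda>i. if rho * s i > d then s i else 0)"
  define Xq where "Xq = trunc_mat d rho X"
  define Yq where "Yq = trunc_ent d rho Y"
  have Xq: "Xq = U ** rdiag e sq ** transpose V" using trunc_eq[OF A] by (simp add: Xq_def sq_def)
  have Aq: "is_svd Xq U e sq V" using A Xq s0 by (auto simp: is_svd_def sq_def)
  have qO: "(Xq, Yq) \<in> Omega" using trunc pO rho0 by (simp add: Xq_def Yq_def)
  have Yq_ent: "Yq $ i $ j = (if rho * \<bar>Y $ i $ j\<bar> > d then Y $ i $ j else 0)" for i j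
    by (simp add: Yq_def trunc_ent_def)
  have eqq: "GRv phi nu lam rho f (Xq, Yq) = FRv nu lam f (Xq, Yq)"
  proof (rule eq_gen[OF phi dphi Aq])
    fix i assume "sq i \<noteq> 0" then show "d \<le> rho * sq i" by (simp add: sq_def split: if_splits)
  next
    fix i j assume "Yq $ i $ j \<noteq> 0" then show "d \<le> rho * \<bar>Yq $ i $ j\<bar>"
      by (simp add: Yq_ent split: if_splits)
  qed
  define S1 where "S1 = (\<Sum>i\<in>UNIV. s i - sq i)"
  define S2 where "S2 = (\<Sum>i\<in>UNIV. \<Sum>j\<in>UNIV. \<bar>Y $ i $ j\<bar> - \<bar>Yq $ i $ j\<bar>)"
  have nn1: "0 \<le> s i - sq i" for i using s0[of i] by (simp add: sq_def)
  have nn2: "0 \<le> \<bar>Y $ i $ j\<bar> - \<bar>Yq $ i $ j\<bar>" for i j by (simp add: Yq_ent)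
  have S1nn: "0 \<le> S1" unfolding S1_def using nn1 by (simp add: sum_nonneg)
  have S2nn: "0 \<le> S2" unfolding S2_def using nn2 by (simp add: sum_nonneg)
  have pt1: "?H (rho * s i) - ?H (rho * sq i) \<ge> (rho / d) * (s i - sq i)" for i
  proof (cases "rho * s i > d")
    case True then show ?thesis by (simp add: sq_def)
  next
    case False
    then have sq0: "sq i = 0" by (simp add: sq_def)
    have a0: "0 \<le> rho * s i" using rho0 s0[of i] by simp
    have "rho * s i / d \<le> 1" using False dp by simp
    then have "rho * s i / d \<le> ?H (rho * s i)" using Hge[OF a0] by simp
    then show ?thesis using sq0 H0 by simp
  qed
  have pt2: "?H (rho * \<bar>Y $ i $ j\<bar>) - ?H (rho * \<bar>Yq $ i $ j\<bar>) \<ge> (rho / d) * (\<bar>Y $ i $ j\<bar> - \<bar>Yq $ i $ j\<bar>)" for i j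
  proof (cases "rho * \<bar>Y $ i $ j\<bar> > d")
    case True then show ?thesis by (simp add: Yq_ent)
  next
    case False
    then have sq0: "Yq $ i $ j = 0" by (simp add: Yq_ent)
    have a0: "0 \<le> rho * \<bar>Y $ i $ j\<bar>" using rho0 by simp
    have "rho * \<bar>Y $ i $ j\<bar> / d \<le> 1" using False dp by simp
    then have "rho * \<bar>Y $ i $ j\<bar> / d \<le> ?H (rho * \<bar>Y $ i $ j\<bar>)" using Hge[OF a0] by simp
    then show ?thesis using sq0 H0 by simp
  qed
  have sum1: "(\<Sum>i\<in>UNIV. ?H (rho * s i)) - (\<Sum>i\<in>UNIV. ?H (rho * sq i)) \<ge> (rho / d) * S1"
  proof -
    have "(rho / d) * S1 = (\<Sum>i\<in>UNIV. (rho / d) * (s i - sq i))" by (simp add: S1_def sum_distrib_left)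
    also have "\<dots> \<le> (\<Sum>i\<in>UNIV. ?H (rho * s i) - ?H (rho * sq i))" by (rule sum_mono) (rule pt1)
    also have "\<dots> = (\<Sum>i\<in>UNIV. ?H (rho * s i)) - (\<Sum>i\<in>UNIV. ?H (rho * sq i))" by (simp add: sum_subtractf)
    finally show ?thesis .
  qed
  have sum2: "(\<Sum>i\<in>UNIV. \<Sum>j\<in>UNIV. ?H (rho * \<bar>Y $ i $ j\<bar>)) - (\<Sum>i\<in>UNIV. \<Sum>j\<in>UNIV. ?H (rho * \<bar>Yq $ i $ j\<bar>)) \<ge> (rho / d) * S2"
  proof -
    have "(rho / d) * S2 = (\<Sum>i\<in>UNIV. \<Sum>j\<in>UNIV. (rho / d) * (\<bar>Y $ i $ j\<bar> - \<bar>Yq $ i $ j\<bar>))"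
      by (simp add: S2_def sum_distrib_left)
    also have "\<dots> \<le> (\<Sum>i\<in>UNIV. \<Sum>j\<in>UNIV. ?H (rho * \<bar>Y $ i $ j\<bar>) - ?H (rho * \<bar>Yq $ i $ j\<bar>))"
      by (intro sum_mono) (rule pt2)
    also have "\<dots> = (\<Sum>i\<in>UNIV. \<Sum>j\<in>UNIV. ?H (rho * \<bar>Y $ i $ j\<bar>)) - (\<Sum>i\<in>UNIV. \<Sum>j\<in>UNIV. ?H (rho * \<bar>Yq $ i $ j\<bar>))"
      by (simp add: sum_subtractf)
    finally show ?thesis .
  qed
  have nX: "norm (X - Xq) \<le> S1"
  proof -
    have "X - Xq = U ** rdiag e (\<lambda>i. s i - sq i) ** transpose V"
      using A Xq by (simp add: is_svd_def usv_diff)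
    moreover have "orthogonal_matrix U" "orthogonal_matrix V" using A by (auto simp: is_svd_def)
    ultimately have "norm (X - Xq) \<le> (\<Sum>i\<in>UNIV. \<bar>s i - sq i\<bar>)"
      using norm_usv[of U V e "\<lambda>i. s i - sq i"] by simp
    then show ?thesis using nn1 by (simp add: S1_def)
  qed
  have nY: "norm (Y - Yq) \<le> S2"
  proof -
    have "norm (Y - Yq) \<le> (\<Sum>i\<in>UNIV. \<Sum>j\<in>UNIV. \<bar>(Y - Yq) $ i $ j\<bar>)" by (rule norm_l1)
    also have "\<dots> = S2" unfolding S2_def by (intro sum.cong refl) (simp add: Yq_ent)
    finally show ?thesis .
  qed
  have dpq: "dist (X, Y) (Xq, Yq) \<le> S1 + S2"
  proof -
    have "dist (X, Y) (Xq, Yq) = norm (X - Xq, Y - Yq)" by (simp add: dist_norm)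
    also have "\<dots> \<le> norm (X - Xq) + norm (Y - Yq)" by (rule norm_Pair_le)
    finally show ?thesis using nX nY by simp
  qed
  have Lf0: "0 \<le> Lf" using f_lip by (rule lipschitz_on_nonneg)
  have lip: "\<bar>real_of_ereal (f (X, Y)) - real_of_ereal (f (Xq, Yq))\<bar> \<le> Lf * (S1 + S2)"
  proof -
    have "dist (real_of_ereal (f (X, Y))) (real_of_ereal (f (Xq, Yq))) \<le> Lf * dist (X, Y) (Xq, Yq)"
      by (rule lipschitz_onD[OF f_lip pO qO])
    also have "\<dots> \<le> Lf * (S1 + S2)" using dpq Lf0 by (rule mult_left_mono)
    finally show ?thesis by (simp add: dist_real_def)
  qed
  define c where "c = rho * ?m / d - nu * Lf"
  have cp: "c > 0" using cpos by (simp add: c_def)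
  have main: "GRv phi nu lam rho f (X, Y) - GRv phi nu lam rho f (Xq, Yq) \<ge> c * (S1 + S2)"
  proof -
    have fl: "nu * (real_of_ereal (f (X, Y)) - real_of_ereal (f (Xq, Yq))) \<ge> - (nu * Lf * (S1 + S2))"
    proof -
      have "- (Lf * (S1 + S2)) \<le> real_of_ereal (f (X, Y)) - real_of_ereal (f (Xq, Yq))" using lip by linarith
      then have "nu * (- (Lf * (S1 + S2))) \<le> nu * (real_of_ereal (f (X, Y)) - real_of_ereal (f (Xq, Yq)))"
        using nu by (intro mult_left_mono) auto
      then show ?thesis by (simp add: algebra_simps)
    qed
    have l2: "lam * ((rho / d) * S2) \<ge> ?m * ((rho / d) * S2)"
      using S2nn rho0 dp by (intro mult_right_mono) auto
    have l1: "(rho / d) * S1 \<ge> ?m * ((rho / d) * S1)"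
    proof -
      have "0 \<le> (rho / d) * S1" using S1nn rho0 dp by simp
      then have "?m * ((rho / d) * S1) \<le> 1 * ((rho / d) * S1)" by (intro mult_right_mono) auto
      then show ?thesis by simp
    qed
    have l3: "lam * ((\<Sum>i\<in>UNIV. \<Sum>j\<in>UNIV. ?H (rho * \<bar>Y $ i $ j\<bar>)) - (\<Sum>i\<in>UNIV. \<Sum>j\<in>UNIV. ?H (rho * \<bar>Yq $ i $ j\<bar>)))
          \<ge> lam * ((rho / d) * S2)"
      using sum2 lam by (intro mult_left_mono) auto
    have "GRv phi nu lam rho f (X, Y) - GRv phi nu lam rho f (Xq, Yq)
        = nu * (real_of_ereal (f (X, Y)) - real_of_ereal (f (Xq, Yq)))
          + ((\<Sum>i\<in>UNIV. ?H (rho * s i)) - (\<Sum>i\<in>UNIV. ?H (rho * sq i)))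
          + lam * ((\<Sum>i\<in>UNIV. \<Sum>j\<in>UNIV. ?H (rho * \<bar>Y $ i $ j\<bar>)) - (\<Sum>i\<in>UNIV. \<Sum>j\<in>UNIV. ?H (rho * \<bar>Yq $ i $ j\<bar>)))"
      by (simp add: GRv_svd[OF A] GRv_svd[OF Aq] algebra_simps)
    moreover have "c * (S1 + S2) = - (nu * Lf * (S1 + S2)) + ?m * ((rho / d) * S1) + ?m * ((rho / d) * S2)"
      by (simp add: c_def algebra_simps add_divide_distrib)
    ultimately show ?thesis using fl sum1 l1 l2 l3 by linarith
  qed
  show ?thesis
  proof (intro bexI[OF _ qO] conjI)
    show "GRv phi nu lam rho f (Xq, Yq) = FRv nu lam f (Xq, Yq)" by (rule eqq)
    show "GRv phi nu lam rho f (Xq, Yq) \<le> GRv phi nu lam rho f (X, Y)"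
      using main cp S1nn S2nn by (smt (verit) mult_nonneg_nonneg)
    show "GRv phi nu lam rho f (X, Y) = FRv nu lam f (X, Y) \<or> GRv phi nu lam rho f (Xq, Yq) < GRv phi nu lam rho f (X, Y)"
    proof (cases "(\<forall>i. s i \<noteq> 0 \<longrightarrow> d \<le> rho * s i) \<and> (\<forall>i j. Y $ i $ j \<noteq> 0 \<longrightarrow> d \<le> rho * \<bar>Y $ i $ j\<bar>)")
      case True
      then have "GRv phi nu lam rho f (X, Y) = FRv nu lam f (X, Y)"
        by (intro eq_gen[OF phi dphi A]) auto
      then show ?thesis by simp
    next
      case False
      have "S1 + S2 > 0"
      proof (cases "\<exists>i. s i \<noteq> 0 \<and> \<not> d \<le> rho * s i")
        case True
        then obtain i where i: "s i \<noteq> 0" "\<not> d \<le> rho * s i" by blast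
        then have "s i - sq i = s i" by (simp add: sq_def)
        moreover have "s i - sq i \<le> S1" unfolding S1_def
          by (rule member_le_sum) (use nn1 in auto)
        ultimately have "S1 > 0" using i(1) s0[of i] by simp
        then show ?thesis using S2nn by simp
      next
        case F2: False
        then obtain i j where ij: "Y $ i $ j \<noteq> 0" "\<not> d \<le> rho * \<bar>Y $ i $ j\<bar>" using False by blast
        then have "\<bar>Y $ i $ j\<bar> - \<bar>Yq $ i $ j\<bar> = \<bar>Y $ i $ j\<bar>" by (simp add: Yq_ent)
        moreover have "\<bar>Y $ i $ j\<bar> - \<bar>Yq $ i $ j\<bar> \<le> (\<Sum>j\<in>UNIV. \<bar>Y $ i $ j\<bar> - \<bar>Yq $ i $ j\<bar>)"
          by (rule member_le_sum) (use nn2 in auto)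
        moreover have "(\<Sum>j\<in>UNIV. \<bar>Y $ i $ j\<bar> - \<bar>Yq $ i $ j\<bar>) \<le> S2" unfolding S2_def
          by (rule member_le_sum) (use nn2 in \<open>auto intro: sum_nonneg\<close>)
        ultimately have "S2 > 0" using ij(1) by simp
        then show ?thesis using S1nn by simp
      qed
      then have "c * (S1 + S2) > 0" using cp by simp
      then show ?thesis using main by simp
    qed
  qed
qed



lemma final:
  fixes F G :: "'a \<Rightarrow> ereal"
  assumes "\<And>p. p \<in> Om \<Longrightarrow> F p = ereal (FR p)" "\<And>p. p \<in> Om \<Longrightarrow> G p = ereal (GR p)"
    "\<And>p. p \<in> Om \<Longrightarrow> GR p \<le> FR p"
    "\<And>p. p \<in> Om \<Longrightarrow> \<exists>q\<in>Om. GR q = FR q \<and> GR q \<le> GR p \<and> (GR p = FR p \<or> GR q < GR p)"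
  shows "argmin_on Om F = argmin_on Om G"
proof (rule argmin_transfer)
  fix p assume p: "p \<in> Om"
  show "G p \<le> F p" using assms(1-3)[OF p] by simp
  obtain q where q: "q \<in> Om" "GR q = FR q" "GR q \<le> GR p" "GR p = FR p \<or> GR q < GR p"
    using assms(4)[OF p] by blast
  have "G q = F q \<and> G q \<le> G p \<and> (G p = F p \<or> G q < G p)"
    using q assms(1,2)[OF p] assms(1,2)[OF q(1)] by auto
  then show "\<exists>q\<in>Om. G q = F q \<and> G q \<le> G p \<and> (G p = F p \<or> G q < G p)"
    using q(1) by blast
qed

theorem corollary5p2:
  fixes phi :: "real \<Rightarrow> ereal" and tstar t0 d :: real
    and f :: "(real^'n2^'n1) \<times> (real^'n2^'n1) \<Rightarrow> ereal"
    and Omega :: "((real^'n2^'n1) \<times> (real^'n2^'n1)) set"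
    and nu lam Lf rho :: real
  assumes dims: "CARD('n1) \<le> CARD('n2)"
    and phi: "in_Phi phi tstar"
    and dphi: "((\<lambda>t. real_of_ereal (phi t)) has_real_derivative d) (at_left 1)"
    and t0: "0 \<le> t0" "t0 < 1" "1 / (1 - tstar) \<in> subdiff_psi phi t0"
    and nu: "nu > 0" and lam: "lam > 0"
    and f_proper: "proper_fun f" and f_lsc: "lsc_fun f"
    and Omega_closed: "closed Omega"
    and f_fin: "\<forall>p\<in>Omega. f p \<noteq> \<infinity>"
    and f_lip: "lipschitz_on Lf Omega (\<lambda>p. real_of_ereal (f p))"
    and trunc: "\<forall>X Y r. (X, Y) \<in> Omega \<and> r > 0 \<longrightarrow>
                  (trunc_mat d r X, trunc_ent d r Y) \<in> Omega"
    and nonempty: "argmin_on Omega (\<lambda>(X, Y). ereal nu * f (X, Y)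
                      + ereal (real (rank X) + lam * real (l0_norm Y))) \<noteq> {}"
    and rho: "rho > d * (1 - tstar) * nu * Lf / (min 1 lam * (1 - t0))"
  shows "argmin_on Omega (\<lambda>(X, Y). ereal nu * f (X, Y)
                      + ereal (real (rank X) + lam * real (l0_norm Y)))
       = argmin_on Omega (\<lambda>(X, Y). ereal nu * f (X, Y) + ereal (rho * nuc_norm X)
                      - (\<Sum>\<^sub># (image_mset (\<lambda>s. psi_conj phi (rho * s)) (sing_vals X)))
                      + ereal (rho * lam * l1_norm Y)
                      - ereal lam * (\<Sum>i\<in>UNIV. \<Sum>j\<in>UNIV. psi_conj phi (rho * \<bar>Y $ i $ j\<bar>)))"
proof -
  let ?m = "min 1 lam"
  have Lf0: "0 \<le> Lf" using f_lip by (rule lipschitz_on_nonneg)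
  have dp: "d > 0" by (rule d_pos(2)[OF phi dphi])
  have ts: "tstar \<le> t0" by (rule t0_ge[OF phi dphi t0])
  have m0: "?m > 0" using lam by simp
  have K0: "0 \<le> d * nu * Lf / ?m" using dp nu Lf0 m0 by simp
  have Kle: "d * nu * Lf / ?m \<le> d * (1 - tstar) * nu * Lf / (?m * (1 - t0))"
  proof -
    have r: "(1 - tstar) / (1 - t0) \<ge> 1" using ts t0(2) by simp
    have "(d * nu * Lf / ?m) * 1 \<le> (d * nu * Lf / ?m) * ((1 - tstar) / (1 - t0))"
      using K0 r by (intro mult_left_mono) auto
    also have "\<dots> = d * (1 - tstar) * nu * Lf / (?m * (1 - t0))" by (simp add: field_simps)
    finally show ?thesis by simp
  qed
  have rhoK: "rho > d * nu * Lf / ?m" using rho Kle by linarith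
  have rho0: "rho > 0" using rhoK K0 by linarith
  have cpos: "rho * ?m / d - nu * Lf > 0"
  proof -
    have "rho * ?m > d * nu * Lf" using rhoK m0 by (simp add: pos_divide_less_eq)
    then have "rho * ?m / d > nu * Lf" using dp by (simp add: pos_less_divide_eq mult.commute mult.left_commute)
    then show ?thesis by simp
  qed
  have fin: "f p = ereal (real_of_ereal (f p))" if "p \<in> Omega" for p
  proof -
    have "f p \<noteq> \<infinity>" using f_fin that by blast
    moreover have "f p \<noteq> -\<infinity>" using f_proper unfolding proper_fun_def by blast
    ultimately show ?thesis by (cases "f p") auto
  qed
  have Feq: "(\<lambda>(X, Y). ereal nu * f (X, Y) + ereal (real (rank X) + lam * real (l0_norm Y))) (X, Y)
              = ereal (FRv nu lam f (X, Y))" if "(X, Y) \<in> Omega" for X Y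
  proof -
    obtain U e s V where A: "is_svd X U e s V" using svd_exists[OF dims] by blast
    have fv: "f (X, Y) = ereal (real_of_ereal (f (X, Y)))" using fin[OF that] .
    show ?thesis
      unfolding prod.case objF[where f=f and Y=Y and v="real_of_ereal (f (X, Y))" and nu=nu and lam=lam, OF A fv] using rank_svd[OF A] by (simp add: FRv_def)
  qed
  have Geq: "(\<lambda>(X, Y). ereal nu * f (X, Y) + ereal (rho * nuc_norm X)
                      - (\<Sum>\<^sub># (image_mset (\<lambda>s. psi_conj phi (rho * s)) (sing_vals X)))
                      + ereal (rho * lam * l1_norm Y)
                      - ereal lam * (\<Sum>i\<in>UNIV. \<Sum>j\<in>UNIV. psi_conj phi (rho * \<bar>Y $ i $ j\<bar>))) (X, Y)
              = ereal (GRv phi nu lam rho f (X, Y))" if "(X, Y) \<in> Omega" for X Y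
  proof -
    obtain U e s V where A: "is_svd X U e s V" using svd_exists[OF dims] by blast
    have fv: "f (X, Y) = ereal (real_of_ereal (f (X, Y)))" using fin[OF that] .
    show ?thesis
      unfolding prod.case objG[where f=f and Y=Y and v="real_of_ereal (f (X, Y))" and nu=nu and lam=lam and rho=rho, OF phi A fv] by (simp add: GRv_svd[OF A])
  qed
  show ?thesis
    apply (rule final[where FR = "FRv nu lam f" and GR = "GRv phi nu lam rho f"])
    subgoal for p using Feq[of "fst p" "snd p"] by simp
    subgoal for p using Geq[of "fst p" "snd p"] by simp
    subgoal for p
    proof -
      assume pO: "p \<in> Omega"
      obtain U e s V where A: "is_svd (fst p) U e s V" using svd_exists[OF dims] by blast
      show ?thesis using le_gen[OF phi dphi A lam, of nu rho f "snd p"] by simp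
    qed
    subgoal for p
    proof -
      assume pO: "p \<in> Omega"
      obtain U e s V where A: "is_svd (fst p) U e s V" using svd_exists[OF dims] by blast
      have pO': "(fst p, snd p) \<in> Omega" using pO by simp
      show ?thesis using point_key[OF phi dphi nu lam rho0 cpos f_lip trunc pO' A] by simp
    qed
    done
qed


end
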